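(* Let $\mathcal U$ and $\mathcal V$ be TRO's. The identity map on $\mathcal U\otimes\mathcal V$ extends to a complete contraction $\mathcal U\otimes_{\rm h}\mathcal V\to\mathcal U\otimes_{\rm tmax}\mathcal V$.
   Context: A TRO is a norm-closed subspace $\mathcal U\subseteq\mathcal B(H,K)$ with $RS^*T\in\mathcal U$ for all $R,S,T\in\mathcal U$; it carries the operator space structure inherited from $M_n(\mathcal B(H,K))=\mathcal B(H^n,K^n)$ (which is independent of the concrete realisation). $\mathcal U\otimes_{\rm h}\mathcal V$ is the Haagerup tensor product of these operator spaces. A ternary morphism is a linear map $\theta$ with $\theta(uv^*w)=\theta(u)\theta(v)^*\theta(w)$. A pair of ternary morphisms $\phi:\mathcal U\to\mathcal B(H)$, $\psi:\mathcal V\to\mathcal B(H)$ is commuting if $\phi(u)\psi(v)=\psi(v)\phi(u)$ and $\phi(u)\psi(v)^*=\psi(v)^*\phi(u)$ for all $u,v$; $\phi\cdot\psi$ is the linear map $u\otimes v\mapsto\phi(u)\psi(v)$. The operator space $\mathcal U\otimes_{\rm tmax}\mathcal V$ is the completion of $\mathcal U\otimes\mathcal V$ with matricial norms $\|[w_{i,j}]\|_n=\sup\|[(\phi\cdot\psi)(w_{i,j})]\|$, the supremum over all commuting pairs $(\phi,\psi)$ on all Hilbert spaces. *)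

theory Defs
  imports "HOL-Analysis.Analysis"
begin

class complex_vector = real_vector +
  fixes scaleC :: "complex \<Rightarrow> 'a \<Rightarrow> 'a"  (infixr \<open>*\<^sub>C\<close> 75)
  assumes scaleR_scaleC: "scaleR r x = scaleC (complex_of_real r) x"
    and scaleC_add_right: "a *\<^sub>C (x + y) = a *\<^sub>C x + a *\<^sub>C y"
    and scaleC_add_left: "(a + b) *\<^sub>C x = a *\<^sub>C x + b *\<^sub>C x"
    and scaleC_scaleC: "a *\<^sub>C (b *\<^sub>C x) = (a * b) *\<^sub>C x"
    and scaleC_one: "1 *\<^sub>C x = x"

class complex_normed_vector = complex_vector + real_normed_vector +
  assumes norm_scaleC: "norm (a *\<^sub>C x) = cmod a * norm x"

class complex_inner = complex_normed_vector +
  fixes cinner :: "'a \<Rightarrow> 'a \<Rightarrow> complex"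
  assumes cinner_commute: "cinner x y = cnj (cinner y x)"
    and cinner_add_right: "cinner x (y + z) = cinner x y + cinner x z"
    and cinner_scaleC_right: "cinner x (a *\<^sub>C y) = a * cinner x y"
    and cinner_norm: "cinner x x = complex_of_real ((norm x)\<^sup>2)"

class chilbert_space = complex_inner + complete_space

definition clinear_map :: "('a::complex_vector \<Rightarrow> 'b::complex_vector) \<Rightarrow> bool" where
  "clinear_map f \<longleftrightarrow> (\<forall>x y. f (x + y) = f x + f y) \<and> (\<forall>c x. f (c *\<^sub>C x) = c *\<^sub>C f x)"

definition bounded_op :: "('a::complex_normed_vector \<Rightarrow> 'b::complex_normed_vector) \<Rightarrow> bool" where
  "bounded_op T \<longleftrightarrow> clinear_map T \<and> (\<exists>K. \<forall>x. norm (T x) \<le> K * norm x)"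

definition op_norm :: "('a::complex_normed_vector \<Rightarrow> 'b::complex_normed_vector) \<Rightarrow> real" where
  "op_norm T = Sup {norm (T x) | x. norm x \<le> 1}"

definition adj :: "('a::chilbert_space \<Rightarrow> 'b::chilbert_space) \<Rightarrow> ('b \<Rightarrow> 'a)" where
  "adj T = (THE S. \<forall>x y. cinner (T x) y = cinner x (S y))"

text \<open>Norm of an m \<times> p matrix [X i j] of operators H \<rightarrow> K, viewed as an
  operator H^p \<rightarrow> K^m (the operator space structure of B(H,K)).\<close>
definition mat_norm :: "nat \<Rightarrow> nat \<Rightarrow> (nat \<Rightarrow> nat \<Rightarrow> ('a::complex_normed_vector \<Rightarrow> 'b::complex_normed_vector)) \<Rightarrow> real" where
  "mat_norm m p X = Sup {sqrt (\<Sum>i<m. (norm (\<Sum>j<p. X i j (h j)))\<^sup>2) | h. (\<Sum>j<p. (norm (h j))\<^sup>2) \<le> 1}"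

definition is_TRO :: "('a::chilbert_space \<Rightarrow> 'b::chilbert_space) set \<Rightarrow> bool" where
  "is_TRO U \<longleftrightarrow>
     (\<forall>T\<in>U. bounded_op T) \<and>
     (\<lambda>_. 0) \<in> U \<and>
     (\<forall>S\<in>U. \<forall>T\<in>U. (\<lambda>x. S x + T x) \<in> U) \<and>
     (\<forall>c. \<forall>T\<in>U. (\<lambda>x. c *\<^sub>C T x) \<in> U) \<and>
     (\<forall>s T. (\<forall>k. s k \<in> U) \<and> bounded_op T \<and> (\<lambda>k. op_norm (\<lambda>x. s k x - T x)) \<longlonglongrightarrow> 0 \<longrightarrow> T \<in> U) \<and>
     (\<forall>R\<in>U. \<forall>S\<in>U. \<forall>T\<in>U. R \<circ> adj S \<circ> T \<in> U)"

definition ternary_morphism ::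
  "('a::chilbert_space \<Rightarrow> 'b::chilbert_space) set \<Rightarrow> (('a \<Rightarrow> 'b) \<Rightarrow> ('h::chilbert_space \<Rightarrow> 'h)) \<Rightarrow> bool" where
  "ternary_morphism U \<theta> \<longleftrightarrow>
     (\<forall>u\<in>U. bounded_op (\<theta> u)) \<and>
     (\<forall>u\<in>U. \<forall>v\<in>U. \<theta> (\<lambda>x. u x + v x) = (\<lambda>x. \<theta> u x + \<theta> v x)) \<and>
     (\<forall>c. \<forall>u\<in>U. \<theta> (\<lambda>x. c *\<^sub>C u x) = (\<lambda>x. c *\<^sub>C \<theta> u x)) \<and>
     (\<forall>u\<in>U. \<forall>v\<in>U. \<forall>w\<in>U. \<theta> (u \<circ> adj v \<circ> w) = \<theta> u \<circ> adj (\<theta> v) \<circ> \<theta> w)"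

definition commuting_pair ::
  "('a::chilbert_space \<Rightarrow> 'b::chilbert_space) set \<Rightarrow> ('c::chilbert_space \<Rightarrow> 'd::chilbert_space) set \<Rightarrow>
   (('a \<Rightarrow> 'b) \<Rightarrow> ('h::chilbert_space \<Rightarrow> 'h)) \<Rightarrow> (('c \<Rightarrow> 'd) \<Rightarrow> ('h \<Rightarrow> 'h)) \<Rightarrow> bool" where
  "commuting_pair U V \<phi> \<psi> \<longleftrightarrow>
     (\<forall>u\<in>U. \<forall>v\<in>V. \<phi> u \<circ> \<psi> v = \<psi> v \<circ> \<phi> u \<and> \<phi> u \<circ> adj (\<psi> v) = adj (\<psi> v) \<circ> \<phi> u)"

text \<open>Elements of the algebraic tensor product U \<otimes> V are represented by formal sums
  \<Sum> u_k \<otimes> v_k (lists of pairs); two formal sums represent the same tensor iff every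
  bilinear functional on U \<times> V takes the same value on them.\<close>


definition bilinear_fun ::
  "('a::chilbert_space \<Rightarrow> 'b::chilbert_space) set \<Rightarrow> ('c::chilbert_space \<Rightarrow> 'd::chilbert_space) set \<Rightarrow>
   (('a \<Rightarrow> 'b) \<Rightarrow> ('c \<Rightarrow> 'd) \<Rightarrow> complex) \<Rightarrow> bool" where
  "bilinear_fun U V f \<longleftrightarrow>
     (\<forall>u1\<in>U. \<forall>u2\<in>U. \<forall>v\<in>V. f (\<lambda>x. u1 x + u2 x) v = f u1 v + f u2 v) \<and>
     (\<forall>c. \<forall>u\<in>U. \<forall>v\<in>V. f (\<lambda>x. c *\<^sub>C u x) v = c * f u v) \<and>
     (\<forall>u\<in>U. \<forall>v1\<in>V. \<forall>v2\<in>V. f u (\<lambda>x. v1 x + v2 x) = f u v1 + f u v2) \<and>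
     (\<forall>c. \<forall>u\<in>U. \<forall>v\<in>V. f u (\<lambda>x. c *\<^sub>C v x) = c * f u v)"

definition tensor_eq ::
  "('a::chilbert_space \<Rightarrow> 'b::chilbert_space) set \<Rightarrow> ('c::chilbert_space \<Rightarrow> 'd::chilbert_space) set \<Rightarrow>
   (('a \<Rightarrow> 'b) \<times> ('c \<Rightarrow> 'd)) list \<Rightarrow> (('a \<Rightarrow> 'b) \<times> ('c \<Rightarrow> 'd)) list \<Rightarrow> bool" where
  "tensor_eq U V s t \<longleftrightarrow>
     (\<forall>f. bilinear_fun U V f \<longrightarrow> (\<Sum>(u,v)\<leftarrow>s. f u v) = (\<Sum>(u,v)\<leftarrow>t. f u v))"

definition hprod :: "nat \<Rightarrow> (nat \<Rightarrow> nat \<Rightarrow> 'u) \<Rightarrow> (nat \<Rightarrow> nat \<Rightarrow> 'v) \<Rightarrow> nat \<Rightarrow> nat \<Rightarrow> ('u \<times> 'v) list" where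
  "hprod p X Y i j = map (\<lambda>k. (X i k, Y k j)) [0..<p]"

definition h_norm ::
  "('a::chilbert_space \<Rightarrow> 'b::chilbert_space) set \<Rightarrow> ('c::chilbert_space \<Rightarrow> 'd::chilbert_space) set \<Rightarrow>
   nat \<Rightarrow> (nat \<Rightarrow> nat \<Rightarrow> (('a \<Rightarrow> 'b) \<times> ('c \<Rightarrow> 'd)) list) \<Rightarrow> real" where
  "h_norm U V n W = Inf {mat_norm n p X * mat_norm p n Y | p X Y.
      (\<forall>i<n. \<forall>k<p. X i k \<in> U) \<and> (\<forall>k<p. \<forall>j<n. Y k j \<in> V) \<and>
      (\<forall>i<n. \<forall>j<n. tensor_eq U V (hprod p X Y i j) (W i j))}"

definition tensor_map ::
  "(('a \<Rightarrow> 'b) \<Rightarrow> ('h \<Rightarrow> 'h::comm_monoid_add)) \<Rightarrow> (('c \<Rightarrow> 'd) \<Rightarrow> ('h \<Rightarrow> 'h)) \<Rightarrow>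
   (('a \<Rightarrow> 'b) \<times> ('c \<Rightarrow> 'd)) list \<Rightarrow> ('h \<Rightarrow> 'h)" where
  "tensor_map \<phi> \<psi> s = (\<lambda>x. \<Sum>(u,v)\<leftarrow>s. \<phi> u (\<psi> v x))"

end

theory Submission
  imports Defs
begin

instance chilbert_space \<subseteq> banach ..

lemma scaleC_zero_right [simp]: "c *\<^sub>C (0::'a::complex_vector) = 0"
proof -
  have "c *\<^sub>C (0::'a) = c *\<^sub>C 0 + c *\<^sub>C 0" by (metis scaleC_add_right add_0)
  thus ?thesis by simp
qed

lemma scaleC_zero_left [simp]: "(0::complex) *\<^sub>C (x::'a::complex_vector) = 0"
  by (metis scaleR_scaleC scaleR_zero_left of_real_0)

lemma scaleC_real: "complex_of_real r *\<^sub>C (x::'a::complex_vector) = r *\<^sub>R x"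
  by (simp add: scaleR_scaleC)

lemma scaleC_minus_right: "c *\<^sub>C (- x) = - (c *\<^sub>C (x::'a::complex_vector))"
proof -
  have "c *\<^sub>C (- x) + c *\<^sub>C x = 0" by (simp flip: scaleC_add_right)
  thus ?thesis by (simp add: add_eq_0_iff2)
qed

lemma scaleC_diff_right: "c *\<^sub>C (x - y) = c *\<^sub>C x - c *\<^sub>C (y::'a::complex_vector)"
  by (simp only: diff_conv_add_uminus scaleC_add_right scaleC_minus_right)

lemma scaleC_minus_left: "(- c) *\<^sub>C x = - (c *\<^sub>C (x::'a::complex_vector))"
proof -
  have "(- c) *\<^sub>C x + c *\<^sub>C x = 0" by (simp flip: scaleC_add_left)
  thus ?thesis by (simp add: add_eq_0_iff2)
qed

lemma scaleC_diff_left: "(a - b) *\<^sub>C x = a *\<^sub>C x - b *\<^sub>C (x::'a::complex_vector)"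
  by (simp only: diff_conv_add_uminus scaleC_add_left scaleC_minus_left)

lemma scaleC_sum_right: "c *\<^sub>C (\<Sum>i\<in>I. f i) = (\<Sum>i\<in>I. c *\<^sub>C (f i::'a::complex_vector))"
  by (induction I rule: infinite_finite_induct) (auto simp: scaleC_add_right)

lemma scaleC_eq_0_iff: "(c *\<^sub>C (x::'a::complex_vector) = 0) \<longleftrightarrow> c = 0 \<or> x = 0"
proof
  assume h: "c *\<^sub>C x = 0"
  show "c = 0 \<or> x = 0"
  proof (cases "c = 0")
    case False
    have "x = (inverse c * c) *\<^sub>C x" using False by (simp add: scaleC_one)
    also have "\<dots> = inverse c *\<^sub>C (c *\<^sub>C x)" by (simp add: scaleC_scaleC)
    finally show ?thesis using h by simp
  qed simp
qed auto

lemma cinner_add_left: "cinner (x + y) (z::'a::complex_inner) = cinner x z + cinner y z"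
  by (subst (1 2 3) cinner_commute) (simp add: cinner_add_right)

lemma cinner_scaleC_left: "cinner (c *\<^sub>C x) (y::'a::complex_inner) = cnj c * cinner x y"
  by (subst (1 2) cinner_commute) (simp add: cinner_scaleC_right)

lemma cinner_zero_right [simp]: "cinner x (0::'a::complex_inner) = 0"
proof -
  have "cinner x (0::'a) = cinner x ((0::complex) *\<^sub>C 0)" by simp
  also have "\<dots> = 0" by (simp only: cinner_scaleC_right) simp
  finally show ?thesis .
qed

lemma cinner_zero_left [simp]: "cinner (0::'a::complex_inner) x = 0"
  by (subst cinner_commute) simp

lemma cinner_minus_right: "cinner x (- y) = - cinner x (y::'a::complex_inner)"
proof -
  have "cinner x (- y) + cinner x y = 0" by (simp flip: cinner_add_right)
  thus ?thesis by (simp add: add_eq_0_iff2)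
qed

lemma cinner_minus_left: "cinner (- x) y = - cinner x (y::'a::complex_inner)"
proof -
  have "cinner (- x) y + cinner x y = 0" by (simp flip: cinner_add_left)
  thus ?thesis by (simp add: add_eq_0_iff2)
qed

lemma cinner_diff_right: "cinner x (y - z) = cinner x y - cinner x (z::'a::complex_inner)"
  by (simp only: diff_conv_add_uminus cinner_add_right cinner_minus_right)

lemma cinner_diff_left: "cinner (x - y) z = cinner x z - cinner y (z::'a::complex_inner)"
  by (simp only: diff_conv_add_uminus cinner_add_left cinner_minus_left)

lemma cinner_sum_right: "cinner x (\<Sum>i\<in>I. f i) = (\<Sum>i\<in>I. cinner x (f i::'a::complex_inner))"
  by (induction I rule: infinite_finite_induct) (auto simp: cinner_add_right)

lemma cinner_sum_left: "cinner (\<Sum>i\<in>I. f i) x = (\<Sum>i\<in>I. cinner (f i::'a::complex_inner) x)"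
  by (induction I rule: infinite_finite_induct) (auto simp: cinner_add_left)

lemma cinner_self_eq_0: "cinner x x = 0 \<longleftrightarrow> (x::'a::complex_inner) = 0"
  by (simp add: cinner_norm)

lemma cinner_eqI: "(\<And>z. cinner z x = cinner z y) \<Longrightarrow> x = (y::'a::complex_inner)"
proof -
  assume h: "\<And>z. cinner z x = cinner z y"
  have "cinner (x - y) (x - y) = 0" by (simp add: cinner_diff_right h)
  thus ?thesis by (simp add: cinner_self_eq_0)
qed

lemma Re_cinner_self: "Re (cinner x x) = (norm (x::'a::complex_inner))\<^sup>2"
  by (simp add: cinner_norm)

lemma norm_add_sq: "(norm (x + y))\<^sup>2 = (norm x)\<^sup>2 + (norm y)\<^sup>2 + 2 * Re (cinner x (y::'a::complex_inner))"
proof -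
  have e: "cinner y x = cnj (cinner x y)" by (rule cinner_commute)
  have "cinner (x+y) (x+y) = cinner x x + cinner y y + (cinner x y + cinner y x)"
    by (simp add: cinner_add_left cinner_add_right)
  hence "Re (cinner (x+y) (x+y)) = Re (cinner x x) + Re (cinner y y) + 2 * Re (cinner x y)"
    by (simp add: e)
  thus ?thesis by (simp add: Re_cinner_self)
qed

lemma norm_diff_sq: "(norm (x - y))\<^sup>2 = (norm x)\<^sup>2 + (norm y)\<^sup>2 - 2 * Re (cinner x (y::'a::complex_inner))"
  using norm_add_sq[of x "-y"] by (simp add: cinner_minus_right)

lemma Re_cinner_le: "Re (cinner x y) \<le> norm x * norm (y::'a::complex_inner)"
proof -
  have "(norm (x + y))\<^sup>2 \<le> (norm x + norm y)\<^sup>2"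
    by (simp add: norm_triangle_ineq power_mono)
  thus ?thesis by (simp add: norm_add_sq power2_sum)
qed

lemma cinner_Cauchy_Schwarz: "cmod (cinner x y) \<le> norm x * norm (y::'a::complex_inner)"
proof (cases "cinner x y = 0")
  case False
  define c where "c = cinner x y"
  define w where "w = (c / complex_of_real (cmod c)) *\<^sub>C x"
  have cm: "cmod c > 0" using False c_def by simp
  have "cinner w y = cnj (c / complex_of_real (cmod c)) * c"
    by (simp add: w_def cinner_scaleC_left c_def)
  also have "\<dots> = (c * cnj c) / complex_of_real (cmod c)"
    by (simp add: complex_cnj_divide)
  also have "\<dots> = complex_of_real ((cmod c)\<^sup>2) / complex_of_real (cmod c)"
    by (subst complex_norm_square) (rule refl)
  also have "\<dots> = complex_of_real (cmod c)"
    using cm by (simp add: power2_eq_square)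
  finally have "Re (cinner w y) = cmod c" by simp
  moreover have "norm w = norm x"
    using cm by (simp add: w_def norm_scaleC norm_divide)
  ultimately show ?thesis using Re_cinner_le[of w y] c_def by simp
qed simp



lemma clinear_add: "clinear_map T \<Longrightarrow> T (x + y) = T x + T y"
  by (simp add: clinear_map_def)
lemma clinear_scaleC: "clinear_map T \<Longrightarrow> T (c *\<^sub>C x) = c *\<^sub>C T x"
  by (simp add: clinear_map_def)
lemma clinear_zero: "clinear_map (T::'a::complex_vector \<Rightarrow> 'b::complex_vector) \<Longrightarrow> T 0 = 0"
  using clinear_scaleC[of T 0 0] by simp
lemma clinear_scaleR: "clinear_map (T::'a::complex_vector \<Rightarrow> 'b::complex_vector) \<Longrightarrow> T (r *\<^sub>R x) = r *\<^sub>R T x"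
  by (simp add: scaleR_scaleC clinear_scaleC)
lemma clinear_minus: "clinear_map (T::'a::complex_vector \<Rightarrow> 'b::complex_vector) \<Longrightarrow> T (- x) = - T x"
  using clinear_scaleR[of T "-1" x] by simp
lemma clinear_diff: "clinear_map (T::'a::complex_vector \<Rightarrow> 'b::complex_vector) \<Longrightarrow> T (x - y) = T x - T y"
  by (simp only: diff_conv_add_uminus clinear_add clinear_minus)
lemma clinear_sum: "clinear_map (T::'a::complex_vector \<Rightarrow> 'b::complex_vector) \<Longrightarrow> T (\<Sum>i\<in>I. f i) = (\<Sum>i\<in>I. T (f i))"
  by (induction I rule: infinite_finite_induct) (auto simp: clinear_add clinear_zero)

lemma bounded_opD: "bounded_op T \<Longrightarrow> clinear_map T"
  by (simp add: bounded_op_def)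

lemma bounded_op_bound: "bounded_op (T::'a::complex_normed_vector \<Rightarrow> 'b::complex_normed_vector) \<Longrightarrow> \<exists>K\<ge>0. \<forall>x. norm (T x) \<le> K * norm x"
proof -
  assume "bounded_op T"
  then obtain K where K: "\<forall>x. norm (T x) \<le> K * norm x" by (auto simp: bounded_op_def)
  have "\<forall>x. norm (T x) \<le> max K 0 * norm x"
  proof
    fix x :: 'a
    have "K * norm x \<le> max K 0 * norm x" by (simp add: mult_right_mono)
    thus "norm (T x) \<le> max K 0 * norm x" using K by (meson order_trans)
  qed
  thus ?thesis by (intro exI[of _ "max K 0"]) simp
qed

lemma bounded_op_linear: "bounded_op (T::'a::complex_normed_vector \<Rightarrow> 'b::complex_normed_vector) \<Longrightarrow> bounded_linear T"
proof -
  assume b: "bounded_op T"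
  then obtain K where K: "\<forall>x. norm (T x) \<le> K * norm x" by (auto simp: bounded_op_def)
  show ?thesis
    by (rule bounded_linear_intro[where K=K])
       (use b K in \<open>auto simp: bounded_op_def clinear_add clinear_scaleR mult.commute\<close>)
qed

lemma bounded_op_intro:
  assumes "\<And>x y. T (x + y) = T x + T y" "\<And>c x. T (c *\<^sub>C x) = c *\<^sub>C T x"
    "\<And>x. norm (T x) \<le> K * norm x"
  shows "bounded_op T"
  using assms by (auto simp: bounded_op_def clinear_map_def)

section \<open>Riesz representation\<close>

lemma riesz:
  fixes f :: "'a::chilbert_space \<Rightarrow> complex"
  assumes add: "\<And>x y. f (x + y) = f x + f y"
    and sc: "\<And>c x. f (c *\<^sub>C x) = c * f x"
    and bd: "\<And>x. cmod (f x) \<le> K * norm x"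
  shows "\<exists>z. \<forall>x. f x = cinner z x"
proof (cases "\<forall>x. f x = 0")
  case True
  thus ?thesis by (intro exI[of _ 0]) simp
next
  case False
  then obtain x0 where x0: "f x0 \<noteq> 0" by blast
  have f0: "f 0 = 0" using sc[of 0 0] by simp
  define A where "A = {x. f x = 1}"
  define x1 where "x1 = (1 / f x0) *\<^sub>C x0"
  have x1A: "x1 \<in> A" using x0 by (simp add: A_def x1_def sc)
  define d where "d = Inf (norm ` A)"
  have bdd: "bdd_below (norm ` A)" by (rule bdd_belowI[of _ 0]) auto
  have dle: "\<And>x. x \<in> A \<Longrightarrow> d \<le> norm x" unfolding d_def by (rule cInf_lower) (use bdd in auto)
  have d0: "0 \<le> d" unfolding d_def by (rule cInf_greatest) (use x1A in auto)
  have ex: "\<exists>x\<in>A. norm x < d + inverse (real (Suc n))" for n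
  proof -
    have "Inf (norm ` A) < d + inverse (real (Suc n))" by (simp add: d_def)
    from cInf_lessD[OF _ this] x1A show ?thesis by auto
  qed
  then obtain xs where xsA: "\<And>n. xs n \<in> A" and xsn: "\<And>n. norm (xs n) < d + inverse (real (Suc n))"
    by metis
  have mid: "\<And>x y. x \<in> A \<Longrightarrow> y \<in> A \<Longrightarrow> 2 * d \<le> norm (x + y)"
  proof -
    fix x y assume "x \<in> A" "y \<in> A"
    hence "(1/2) *\<^sub>C (x + y) \<in> A" by (simp add: A_def sc add)
    hence "d \<le> norm ((1/2) *\<^sub>C (x + y))" by (rule dle)
    thus "2 * d \<le> norm (x + y)" by (simp add: norm_scaleC)
  qed
  have para: "(norm (x - y))\<^sup>2 = 2 * (norm x)\<^sup>2 + 2 * (norm y)\<^sup>2 - (norm (x + y))\<^sup>2" for x y :: 'a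
    by (simp add: norm_add_sq norm_diff_sq)
  have key: "(norm (xs m - xs n))\<^sup>2 \<le> (4 * d + 2) * (inverse (real (Suc m)) + inverse (real (Suc n)))" for m n
  proof -
    define a where "a = inverse (real (Suc m))"
    define b where "b = inverse (real (Suc n))"
    have a0: "0 \<le> a" "a \<le> 1" and b0: "0 \<le> b" "b \<le> 1" by (auto simp: a_def b_def field_simps)
    have "(norm (xs m))\<^sup>2 \<le> (d + a)\<^sup>2"
      using xsn[of m] by (intro power_mono) (auto simp: a_def)
    moreover have "(norm (xs n))\<^sup>2 \<le> (d + b)\<^sup>2"
      using xsn[of n] by (intro power_mono) (auto simp: b_def)
    moreover have "(2 * d)\<^sup>2 \<le> (norm (xs m + xs n))\<^sup>2"
      using mid[OF xsA xsA] d0 by (intro power_mono) auto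
    ultimately have "(norm (xs m - xs n))\<^sup>2 \<le> 2 * (d + a)\<^sup>2 + 2 * (d + b)\<^sup>2 - (2 * d)\<^sup>2"
      by (simp add: para)
    also have "\<dots> = 4 * d * a + 2 * a * a + 4 * d * b + 2 * b * b"
      by (simp add: power2_eq_square algebra_simps)
    also have "\<dots> \<le> 4 * d * a + 2 * a + 4 * d * b + 2 * b"
      using a0 b0 by (intro add_mono mult_left_le) (auto intro: mult_left_le)
    also have "\<dots> = (4 * d + 2) * (a + b)" by (simp add: algebra_simps)
    finally show ?thesis by (simp add: a_def b_def)
  qed
  have "Cauchy xs"
  proof (rule CauchyI)
    fix e :: real assume e: "0 < e"
    obtain M :: nat where M: "2 * (4 * d + 2) / (e * e) < real M"
      using reals_Archimedean2 by blast
    show "\<exists>M. \<forall>m\<ge>M. \<forall>n\<ge>M. norm (xs m - xs n) < e"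
    proof (intro exI allI impI)
      fix m n assume m: "M \<le> m" and n: "M \<le> n"
      have Mpos: "0 < real (Suc M)" by simp
      have im: "inverse (real (Suc m)) \<le> inverse (real (Suc M))" using m by (simp add: field_simps)
      have inn: "inverse (real (Suc n)) \<le> inverse (real (Suc M))" using n by (simp add: field_simps)
      have "(norm (xs m - xs n))\<^sup>2 \<le> (4 * d + 2) * (2 * inverse (real (Suc M)))"
        using key[of m n] im inn d0
        by (smt (verit, best) mult_left_mono)
      also have "\<dots> < e * e"
      proof -
        have "2 * (4 * d + 2) < e * e * real (Suc M)"
          using M e by (simp add: field_simps) (smt (verit) mult_pos_pos e)
        thus ?thesis using Mpos by (simp add: field_simps)
      qed
      finally have "(norm (xs m - xs n))\<^sup>2 < e\<^sup>2" by (simp add: power2_eq_square)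
      thus "norm (xs m - xs n) < e" using power_less_imp_less_base[of "norm (xs m - xs n)" 2 e] e by simp
    qed
  qed
  then obtain z where z: "xs \<longlonglongrightarrow> z" using Cauchy_convergent convergent_def by blast
  have flin: "bounded_linear f"
  proof (rule bounded_linear_intro[where K=K])
    show "f (r *\<^sub>R x) = r *\<^sub>R f x" for r x
      by (simp add: scaleR_scaleC sc scaleR_conv_of_real)
    show "norm (f x) \<le> norm x * K" for x using bd[of x] by (simp add: mult.commute)
  qed (rule add)
  have "(\<lambda>n. f (xs n)) \<longlonglongrightarrow> f z" by (rule bounded_linear.tendsto[OF flin z])
  moreover have "(\<lambda>n. f (xs n)) = (\<lambda>n. 1)" using xsA by (auto simp: A_def)
  ultimately have fz: "f z = 1" using LIMSEQ_unique tendsto_const by metis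
  have nz: "norm z \<le> d"
  proof -
    have "(\<lambda>n. norm (xs n)) \<longlonglongrightarrow> norm z" by (rule tendsto_norm[OF z])
    moreover have "(\<lambda>n. d + inverse (real (Suc n))) \<longlonglongrightarrow> d" by (rule LIMSEQ_inverse_real_of_nat_add)
    ultimately show ?thesis using xsn by (intro LIMSEQ_le) (auto intro: less_imp_le)
  qed
  have orth: "cinner z w = 0" if w: "f w = 0" for w
  proof (rule ccontr)
    assume cne: "cinner z w \<noteq> 0"
    define c where "c = cinner z w"
    define s where "s = inverse ((norm w)\<^sup>2 + 1)"
    have wpos: "0 < (norm w)\<^sup>2 + 1" by (metis add_nonneg_pos zero_le_power2 zero_less_one)
    hence s0: "0 < s" by (simp add: s_def)
    have sw: "s * (norm w)\<^sup>2 < 1" using wpos by (simp add: s_def field_simps)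
    define t where "t = - (complex_of_real s * cnj c)"
    have "z + t *\<^sub>C w \<in> A" using fz w by (simp add: A_def add sc)
    hence "norm z \<le> norm (z + t *\<^sub>C w)" using dle nz by (meson order_trans)
    hence "(norm z)\<^sup>2 \<le> (norm (z + t *\<^sub>C w))\<^sup>2" by (simp add: power_mono)
    also have "\<dots> = (norm z)\<^sup>2 + (cmod t)\<^sup>2 * (norm w)\<^sup>2 + 2 * Re (t * c)"
      by (simp add: norm_add_sq norm_scaleC cinner_scaleC_right c_def power_mult_distrib)
    finally have "0 \<le> (cmod t)\<^sup>2 * (norm w)\<^sup>2 + 2 * Re (t * c)" by simp
    moreover have "(cmod t)\<^sup>2 = s\<^sup>2 * (cmod c)\<^sup>2" using s0
      by (simp add: t_def norm_mult power_mult_distrib)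
    moreover have "Re (t * c) = - s * (cmod c)\<^sup>2"
    proof -
      have "t * c = - (complex_of_real s * (c * cnj c))" by (simp add: t_def algebra_simps)
      also have "c * cnj c = complex_of_real ((cmod c)\<^sup>2)" by (simp only: complex_norm_square)
      finally show ?thesis by simp
    qed
    ultimately have "0 \<le> s * (cmod c)\<^sup>2 * (s * (norm w)\<^sup>2 - 2)"
      by (simp add: power2_eq_square algebra_simps)
    moreover have "s * (cmod c)\<^sup>2 > 0" using s0 cne by (simp add: c_def)
    moreover have "s * (norm w)\<^sup>2 - 2 < 0" using sw by simp
    ultimately show False by (metis mult_pos_neg not_le)
  qed
  have zne: "z \<noteq> 0" using fz f0 by auto
  define z' where "z' = complex_of_real (inverse ((norm z)\<^sup>2)) *\<^sub>C z"
  show ?thesis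
  proof (intro exI allI)
    fix x
    have "f (x - f x *\<^sub>C z) = 0"
      using add[of "x - f x *\<^sub>C z" "f x *\<^sub>C z"] by (simp add: sc fz)
    hence "cinner z (x - f x *\<^sub>C z) = 0" by (rule orth)
    hence "cinner z x = f x * cinner z z" by (simp add: cinner_diff_right cinner_scaleC_right)
    hence "cinner z x = f x * complex_of_real ((norm z)\<^sup>2)" by (simp add: cinner_norm)
    thus "f x = cinner z' x" using zne by (simp add: z'_def cinner_scaleC_left field_simps)
  qed
qed

section \<open>Adjoints\<close>

lemma adj_exists:
  fixes T :: "'a::chilbert_space \<Rightarrow> 'b::chilbert_space"
  assumes "bounded_op T"
  shows "\<exists>S. \<forall>x y. cinner (T x) y = cinner x (S y)"
proof -
  obtain K where K: "\<forall>x. norm (T x) \<le> K * norm x" using assms by (auto simp: bounded_op_def)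
  have lin: "clinear_map T" using assms by (simp add: bounded_op_def)
  have "\<exists>z. \<forall>x. cinner y (T x) = cinner z x" for y
  proof (rule riesz[where K="norm y * K"])
    show "cinner y (T (x1 + x2)) = cinner y (T x1) + cinner y (T x2)" for x1 x2
      by (simp add: clinear_add[OF lin] cinner_add_right)
    show "cinner y (T (c *\<^sub>C x)) = c * cinner y (T x)" for c x
      by (simp add: clinear_scaleC[OF lin] cinner_scaleC_right)
    show "cmod (cinner y (T x)) \<le> norm y * K * norm x" for x
    proof -
      have "cmod (cinner y (T x)) \<le> norm y * norm (T x)" by (rule cinner_Cauchy_Schwarz)
      also have "\<dots> \<le> norm y * (K * norm x)" using K by (simp add: mult_left_mono)
      finally show ?thesis by (simp add: mult.assoc)
    qed
  qed
  then obtain S where S: "\<And>y x. cinner y (T x) = cinner (S y) x" by metis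
  show ?thesis
  proof (intro exI allI)
    fix x y
    show "cinner (T x) y = cinner x (S y)"
      by (metis S cinner_commute)
  qed
qed

lemma adj_unique:
  fixes T :: "'a::chilbert_space \<Rightarrow> 'b::chilbert_space"
  assumes "\<forall>x y. cinner (T x) y = cinner x (S y)" "\<forall>x y. cinner (T x) y = cinner x (S' y)"
  shows "S = S'"
proof
  fix y show "S y = S' y" by (rule cinner_eqI) (use assms in auto)
qed

lemma adj_prop:
  fixes T :: "'a::chilbert_space \<Rightarrow> 'b::chilbert_space"
  assumes "bounded_op T"
  shows "cinner (T x) y = cinner x (adj T y)"
proof -
  obtain S where S: "\<forall>x y. cinner (T x) y = cinner x (S y)" using adj_exists[OF assms] by blast
  have "adj T = S" unfolding adj_def
  proof (rule the_equality)
    show "\<forall>x y. cinner (T x) y = cinner x (S y)" by (rule S)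
  next
    fix S' assume "\<forall>x y. cinner (T x) y = cinner x (S' y)"
    thus "S' = S" using adj_unique[of T S' S] S by blast
  qed
  thus ?thesis using S by simp
qed

lemma adj_prop2:
  fixes T :: "'a::chilbert_space \<Rightarrow> 'b::chilbert_space"
  assumes "bounded_op T"
  shows "cinner (adj T y) x = cinner y (T x)"
  by (metis adj_prop[OF assms] cinner_commute)

lemma adj_bounded:
  fixes T :: "'a::chilbert_space \<Rightarrow> 'b::chilbert_space"
  assumes T: "bounded_op T"
  shows "bounded_op (adj T)"
proof -
  obtain K where K0: "K \<ge> 0" and K: "\<forall>x. norm (T x) \<le> K * norm x" using bounded_op_bound[OF T] by blast
  show ?thesis
  proof (rule bounded_op_intro[where K=K])
    show "adj T (x + y) = adj T x + adj T y" for x y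
      by (rule cinner_eqI) (simp add: adj_prop[OF T, symmetric] cinner_add_right)
    show "adj T (c *\<^sub>C x) = c *\<^sub>C adj T x" for c x
      by (rule cinner_eqI) (simp add: adj_prop[OF T, symmetric] cinner_scaleC_right)
    show "norm (adj T y) \<le> K * norm y" for y
    proof -
      have "(norm (adj T y))\<^sup>2 = Re (cinner (T (adj T y)) y)"
        by (simp add: adj_prop[OF T] Re_cinner_self)
      also have "\<dots> \<le> norm (T (adj T y)) * norm y" by (rule Re_cinner_le)
      also have "\<dots> \<le> K * norm (adj T y) * norm y" using K by (simp add: mult_right_mono)
      finally have h: "norm (adj T y) * norm (adj T y) \<le> norm (adj T y) * (K * norm y)"
        by (simp add: power2_eq_square mult_ac)
      show ?thesis
      proof (cases "norm (adj T y) = 0")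
        case True thus ?thesis using K0 by simp
      next
        case False thus ?thesis using h by (simp add: mult_le_cancel_left)
      qed
    qed
  qed
qed



lemma bounded_op_comp:
  assumes "bounded_op (A::'b::complex_normed_vector \<Rightarrow> 'c::complex_normed_vector)"
    "bounded_op (B::'a::complex_normed_vector \<Rightarrow> 'b)"
  shows "bounded_op (\<lambda>x. A (B x))"
proof -
  obtain KA where KA: "KA \<ge> 0" "\<forall>x. norm (A x) \<le> KA * norm x" using bounded_op_bound[OF assms(1)] by blast
  obtain KB where KB: "KB \<ge> 0" "\<forall>x. norm (B x) \<le> KB * norm x" using bounded_op_bound[OF assms(2)] by blast
  show ?thesis
  proof (rule bounded_op_intro[where K="KA * KB"])
    show "A (B (x + y)) = A (B x) + A (B y)" for x y
      using assms by (simp add: bounded_op_def clinear_add)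
    show "A (B (c *\<^sub>C x)) = c *\<^sub>C A (B x)" for c x
      using assms by (simp add: bounded_op_def clinear_scaleC)
    show "norm (A (B x)) \<le> KA * KB * norm x" for x
    proof -
      have "norm (A (B x)) \<le> KA * norm (B x)" using KA by simp
      also have "\<dots> \<le> KA * (KB * norm x)" using KB KA(1) by (simp add: mult_left_mono)
      finally show ?thesis by (simp add: mult.assoc)
    qed
  qed
qed

lemma bounded_op_sum:
  assumes "\<And>j. j \<in> J \<Longrightarrow> bounded_op (F j :: 'a::complex_normed_vector \<Rightarrow> 'b::complex_normed_vector)"
  shows "bounded_op (\<lambda>x. \<Sum>j\<in>J. F j x)"
proof (cases "finite J")
  case True
  have lin: "\<And>j. j \<in> J \<Longrightarrow> clinear_map (F j)" using assms by (simp add: bounded_op_def)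
  have "\<forall>j\<in>J. \<exists>K. K \<ge> 0 \<and> (\<forall>x. norm (F j x) \<le> K * norm x)"
    using assms bounded_op_bound by blast
  then obtain K where K: "\<And>j. j \<in> J \<Longrightarrow> K j \<ge> 0 \<and> (\<forall>x. norm (F j x) \<le> K j * norm x)"
    by metis
  show ?thesis
  proof (rule bounded_op_intro[where K="\<Sum>j\<in>J. K j"])
    show "(\<Sum>j\<in>J. F j (x + y)) = (\<Sum>j\<in>J. F j x) + (\<Sum>j\<in>J. F j y)" for x y
      by (simp add: lin clinear_add sum.distrib)
    show "(\<Sum>j\<in>J. F j (c *\<^sub>C x)) = c *\<^sub>C (\<Sum>j\<in>J. F j x)" for c x
      by (simp add: lin clinear_scaleC scaleC_sum_right)
    show "norm (\<Sum>j\<in>J. F j x) \<le> (\<Sum>j\<in>J. K j) * norm x" for x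
    proof -
      have "norm (\<Sum>j\<in>J. F j x) \<le> (\<Sum>j\<in>J. K j * norm x)"
        by (rule sum_norm_le) (use K in blast)
      thus ?thesis by (simp add: sum_distrib_right)
    qed
  qed
next
  case False
  thus ?thesis by (simp add: bounded_op_def clinear_map_def) (rule exI[of _ 0], simp)
qed

section \<open>Finite direct sums\<close>

definition nv :: "nat \<Rightarrow> (nat \<Rightarrow> 'a::complex_normed_vector) \<Rightarrow> real" where
  "nv p x = sqrt (\<Sum>j<p. (norm (x j))\<^sup>2)"

definition ip :: "nat \<Rightarrow> (nat \<Rightarrow> 'a::complex_inner) \<Rightarrow> (nat \<Rightarrow> 'a) \<Rightarrow> complex" where
  "ip p x y = (\<Sum>j<p. cinner (x j) (y j))"

definition mapp :: "nat \<Rightarrow> (nat \<Rightarrow> nat \<Rightarrow> ('a \<Rightarrow> 'b::comm_monoid_add)) \<Rightarrow> (nat \<Rightarrow> 'a) \<Rightarrow> nat \<Rightarrow> 'b" where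
  "mapp p X h = (\<lambda>i. \<Sum>j<p. X i j (h j))"

definition mbd :: "nat \<Rightarrow> nat \<Rightarrow> (nat \<Rightarrow> nat \<Rightarrow> ('a::complex_normed_vector \<Rightarrow> 'b::complex_normed_vector)) \<Rightarrow> bool" where
  "mbd m p X \<longleftrightarrow> (\<forall>i<m. \<forall>j<p. bounded_op (X i j))"

lemma nv_L2: "nv p x = L2_set (\<lambda>j. norm (x j)) {..<p}"
  by (simp add: nv_def L2_set_def)

lemma nv_nonneg [simp]: "0 \<le> nv p x"
  by (simp add: nv_def sum_nonneg)

lemma nv_sq: "(nv p x)\<^sup>2 = (\<Sum>j<p. (norm (x j))\<^sup>2)"
  by (simp add: nv_def sum_nonneg)

lemma Re_ip_self: "Re (ip p x x) = (nv p x)\<^sup>2"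
  by (simp add: ip_def nv_sq Re_cinner_self)

lemma ip_self: "ip p x x = complex_of_real ((nv p x)\<^sup>2)"
  by (simp add: ip_def nv_sq cinner_norm)

lemma norm_le_nv: "j < p \<Longrightarrow> norm (x j) \<le> nv p x"
  unfolding nv_L2 by (rule member_le_L2_set) auto

lemma nv_le_sum: "nv p x \<le> (\<Sum>j<p. norm (x j))"
  unfolding nv_L2 by (rule L2_set_le_sum) simp

lemma ip_CS: "cmod (ip p x y) \<le> nv p x * nv p y"
proof -
  have "cmod (ip p x y) \<le> (\<Sum>j<p. cmod (cinner (x j) (y j)))"
    unfolding ip_def by (rule norm_sum)
  also have "\<dots> \<le> (\<Sum>j<p. \<bar>norm (x j)\<bar> * \<bar>norm (y j)\<bar>)"
    by (intro sum_mono) (simp add: cinner_Cauchy_Schwarz)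
  also have "\<dots> \<le> nv p x * nv p y" unfolding nv_L2 by (rule L2_set_mult_ineq)
  finally show ?thesis .
qed

lemma Re_ip_le: "Re (ip p x y) \<le> nv p x * nv p y"
  using ip_CS[of p x y] complex_Re_le_cmod order_trans by blast

lemma ip_commute: "ip p x y = cnj (ip p y x)"
  by (simp add: ip_def cinner_commute[of "x _"])

lemma nv_diff_sq:
  "(nv p (\<lambda>j. x j - y j))\<^sup>2 = (nv p x)\<^sup>2 + (nv p y)\<^sup>2 - 2 * Re (ip p x y)"
  by (simp add: nv_sq ip_def norm_diff_sq sum.distrib sum_subtractf sum_distrib_left)

lemma nv_scaleR: "nv p (\<lambda>j. r *\<^sub>R x j) = \<bar>r\<bar> * nv p x"
proof -
  have "nv p (\<lambda>j. r *\<^sub>R x j) = sqrt (r\<^sup>2 * (\<Sum>j<p. (norm (x j))\<^sup>2))"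
    by (simp add: nv_def power_mult_distrib sum_distrib_left)
  thus ?thesis by (simp add: real_sqrt_mult nv_def)
qed

lemma nv_scaleC: "nv p (\<lambda>j. c *\<^sub>C x j) = cmod c * nv p x"
proof -
  have "nv p (\<lambda>j. c *\<^sub>C x j) = sqrt ((cmod c)\<^sup>2 * (\<Sum>j<p. (norm (x j))\<^sup>2))"
    by (simp add: nv_def norm_scaleC power_mult_distrib sum_distrib_left)
  thus ?thesis by (simp add: real_sqrt_mult nv_def)
qed

lemma nv_zero_iff: "nv p x = 0 \<longleftrightarrow> (\<forall>j<p. x j = 0)"
proof -
  have "nv p x = 0 \<longleftrightarrow> (\<Sum>j<p. (norm (x j))\<^sup>2) = 0" by (simp add: nv_def)
  also have "\<dots> \<longleftrightarrow> (\<forall>j\<in>{..<p}. (norm (x j))\<^sup>2 = 0)" by (rule sum_nonneg_eq_0_iff) auto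
  finally show ?thesis by auto
qed

lemma nv_cong: "(\<And>j. j < p \<Longrightarrow> x j = y j) \<Longrightarrow> nv p x = nv p y"
  by (simp add: nv_def)

lemma mapp_cong: "(\<And>j. j < p \<Longrightarrow> x j = y j) \<Longrightarrow> mapp p X x = mapp p X y"
  by (simp add: mapp_def)

lemma mbd_clinear: "mbd m p X \<Longrightarrow> i < m \<Longrightarrow> j < p \<Longrightarrow> clinear_map (X i j)"
  by (simp add: mbd_def bounded_op_def)

lemma mapp_scaleC: "mbd m p X \<Longrightarrow> i < m \<Longrightarrow> mapp p X (\<lambda>j. c *\<^sub>C h j) i = c *\<^sub>C mapp p X h i"
  by (simp add: mapp_def mbd_clinear clinear_scaleC scaleC_sum_right)

lemma mapp_scaleR: "mbd m p X \<Longrightarrow> i < m \<Longrightarrow> mapp p X (\<lambda>j. r *\<^sub>R h j) i = r *\<^sub>R mapp p X h i"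
  by (simp add: mapp_def mbd_clinear clinear_scaleR scaleR_sum_right)

lemma mapp_add: "mbd m p X \<Longrightarrow> i < m \<Longrightarrow> mapp p X (\<lambda>j. g j + h j) i = mapp p X g i + mapp p X h i"
  by (simp add: mapp_def mbd_clinear clinear_add sum.distrib)

lemma mapp_diff: "mbd m p X \<Longrightarrow> i < m \<Longrightarrow> mapp p X (\<lambda>j. g j - h j) i = mapp p X g i - mapp p X h i"
  by (simp add: mapp_def mbd_clinear clinear_diff sum_subtractf)

lemma mapp_bound_ex:
  assumes "mbd m p X"
  shows "\<exists>K\<ge>0. \<forall>h. nv m (mapp p X h) \<le> K * nv p h"
proof -
  have "\<forall>ij\<in>{..<m}\<times>{..<p}. \<exists>K. K \<ge> 0 \<and> (\<forall>x. norm (X (fst ij) (snd ij) x) \<le> K * norm x)"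
    using assms bounded_op_bound by (auto simp: mbd_def)
  then obtain K where K: "\<And>i j. i < m \<Longrightarrow> j < p \<Longrightarrow> K (i, j) \<ge> 0 \<and> (\<forall>x. norm (X i j x) \<le> K (i, j) * norm x)"
    by (metis (no_types, lifting) SigmaI fst_conv lessThan_iff snd_conv)
  define L where "L = (\<Sum>i<m. \<Sum>j<p. K (i, j))"
  have L0: "L \<ge> 0" unfolding L_def by (intro sum_nonneg) (use K in auto)
  show ?thesis
  proof (intro exI[of _ L] conjI allI L0)
    fix h
    have "nv m (mapp p X h) \<le> (\<Sum>i<m. norm (mapp p X h i))" by (rule nv_le_sum)
    also have "\<dots> \<le> (\<Sum>i<m. \<Sum>j<p. K (i, j) * nv p h)"
    proof (rule sum_mono)
      fix i assume i: "i \<in> {..<m}"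
      show "norm (mapp p X h i) \<le> (\<Sum>j<p. K (i, j) * nv p h)"
        unfolding mapp_def
      proof (rule sum_norm_le)
        fix j assume j: "j \<in> {..<p}"
        have "norm (X i j (h j)) \<le> K (i, j) * norm (h j)" using K i j by auto
        also have "\<dots> \<le> K (i, j) * nv p h" using K i j norm_le_nv[of j p h] by (auto intro: mult_left_mono)
        finally show "norm (X i j (h j)) \<le> K (i, j) * nv p h" .
      qed
    qed
    also have "\<dots> = L * nv p h" by (simp add: L_def sum_distrib_right)
    finally show "nv m (mapp p X h) \<le> L * nv p h" .
  qed
qed

lemma mat_norm_alt: "mat_norm m p X = Sup {nv m (mapp p X h) | h. nv p h \<le> 1}"
proof -
  have "\<And>h. ((\<Sum>j<p. (norm (h j))\<^sup>2) \<le> 1) \<longleftrightarrow> nv p h \<le> 1"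
    by (simp add: nv_def)
  thus ?thesis by (simp add: mat_norm_def nv_def mapp_def)
qed

lemma mat_norm_facts:
  assumes X: "mbd m p X"
  shows "0 \<le> mat_norm m p X" and "nv m (mapp p X h) \<le> mat_norm m p X * nv p h"
proof -
  define S where "S = {nv m (mapp p X h) | h. nv p h \<le> 1}"
  obtain K where K: "K \<ge> 0" "\<And>h. nv m (mapp p X h) \<le> K * nv p h" using mapp_bound_ex[OF X] by blast
  have bdd: "bdd_above S"
  proof (rule bdd_aboveI[of _ K])
    fix x assume "x \<in> S"
    then obtain h where "x = nv m (mapp p X h)" "nv p h \<le> 1" by (auto simp: S_def)
    thus "x \<le> K" using K by (meson mult_left_le order_trans)
  qed
  have z: "nv m (mapp p X (\<lambda>_. 0)) \<in> S" by (auto simp: S_def nv_def)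
  have n0: "nv p (\<lambda>_. 0::'a) = 0" by (simp add: nv_def)
  have "nv m (mapp p X (\<lambda>_. 0)) = 0" using K(2)[of "\<lambda>_. 0"] nv_nonneg[of m "mapp p X (\<lambda>_. 0)"] n0
    by (metis mult_zero_right order_antisym)
  hence "0 \<le> Sup S" using z bdd by (metis cSup_upper)
  thus "0 \<le> mat_norm m p X" by (simp add: mat_norm_alt S_def)
  show "nv m (mapp p X h) \<le> mat_norm m p X * nv p h"
  proof (cases "nv p h = 0")
    case True
    thus ?thesis using K(2)[of h] \<open>0 \<le> mat_norm m p X\<close> by simp
  next
    case False
    hence pos: "nv p h > 0" using nv_nonneg[of p h] by linarith
    define h' where "h' = (\<lambda>j. inverse (nv p h) *\<^sub>R h j)"
    have "nv p h' = 1" using pos by (simp add: h'_def nv_scaleR)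
    hence "nv m (mapp p X h') \<in> S" by (auto simp: S_def)
    hence "nv m (mapp p X h') \<le> Sup S" using bdd by (rule cSup_upper)
    moreover have "nv m (mapp p X h') = inverse (nv p h) * nv m (mapp p X h)"
    proof -
      have "nv m (mapp p X h') = nv m (\<lambda>i. inverse (nv p h) *\<^sub>R mapp p X h i)"
        by (rule nv_cong) (simp add: h'_def mapp_scaleR[OF X])
      thus ?thesis using pos by (simp add: nv_scaleR)
    qed
    ultimately have "inverse (nv p h) * nv m (mapp p X h) \<le> mat_norm m p X"
      by (simp add: mat_norm_alt S_def)
    thus ?thesis using pos by (simp add: field_simps)
  qed
qed

lemma mat_norm_le:
  assumes "c \<ge> 0" "\<And>h. nv m (mapp p X h) \<le> c * nv p h"
  shows "mat_norm m p X \<le> c"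
  unfolding mat_norm_alt
proof (rule cSup_least)
  have "nv p (\<lambda>_. 0::'a) \<le> 1" by (simp add: nv_def)
  thus "{nv m (mapp p X h) |h. nv p h \<le> 1} \<noteq> {}" by blast
  fix x assume "x \<in> {nv m (mapp p X h) |h. nv p h \<le> 1}"
  then obtain h where "x = nv m (mapp p X h)" "nv p h \<le> 1" by auto
  thus "x \<le> c" using assms by (meson mult_left_le order_trans)
qed

section \<open>Matrix multiplication and adjoint\<close>

definition mmul :: "nat \<Rightarrow> (nat \<Rightarrow> nat \<Rightarrow> ('b \<Rightarrow> 'c::comm_monoid_add)) \<Rightarrow> (nat \<Rightarrow> nat \<Rightarrow> ('a \<Rightarrow> 'b)) \<Rightarrow> nat \<Rightarrow> nat \<Rightarrow> ('a \<Rightarrow> 'c)" where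
  "mmul q A B = (\<lambda>i k. \<lambda>x. \<Sum>j<q. A i j (B j k x))"

lemma mbd_mmul: "mbd m q A \<Longrightarrow> mbd q p B \<Longrightarrow> mbd m p (mmul q A B)"
  unfolding mbd_def mmul_def
proof (intro allI impI)
  fix i k assume A: "\<forall>i<m. \<forall>j<q. bounded_op (A i j)" and B: "\<forall>i<q. \<forall>j<p. bounded_op (B i j)"
    and i: "i < m" and k: "k < p"
  show "bounded_op (\<lambda>x. \<Sum>j<q. A i j (B j k x))"
  proof (rule bounded_op_sum)
    fix j assume "j \<in> {..<q}"
    hence "bounded_op (A i j)" "bounded_op (B j k)" using A B i k by auto
    thus "bounded_op (\<lambda>x. A i j (B j k x))" by (rule bounded_op_comp)
  qed
qed

lemma mapp_mmul:
  assumes "mbd m q A" "i < m"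
  shows "mapp p (mmul q A B) h i = mapp q A (mapp p B h) i"
proof -
  have "mapp p (mmul q A B) h i = (\<Sum>k<p. \<Sum>j<q. A i j (B j k (h k)))" by (simp add: mapp_def mmul_def)
  also have "\<dots> = (\<Sum>j<q. \<Sum>k<p. A i j (B j k (h k)))" by (rule sum.swap)
  also have "\<dots> = mapp q A (mapp p B h) i"
    using assms by (simp add: mapp_def mbd_clinear clinear_sum)
  finally show ?thesis .
qed

lemma nv_mapp_cong: "(\<And>i. i < m \<Longrightarrow> mapp p X h i = mapp q Y g i) \<Longrightarrow> nv m (mapp p X h) = nv m (mapp q Y g)"
  by (rule nv_cong)

lemma mat_norm_mmul:
  assumes A: "mbd m q A" and B: "mbd q p B"
  shows "mat_norm m p (mmul q A B) \<le> mat_norm m q A * mat_norm q p B"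
proof (rule mat_norm_le)
  show "0 \<le> mat_norm m q A * mat_norm q p B" using mat_norm_facts(1)[OF A] mat_norm_facts(1)[OF B] by simp
  fix h
  have "nv m (mapp p (mmul q A B) h) = nv m (mapp q A (mapp p B h))"
    by (rule nv_cong) (simp add: mapp_mmul[OF A])
  also have "\<dots> \<le> mat_norm m q A * nv q (mapp p B h)" by (rule mat_norm_facts(2)[OF A])
  also have "\<dots> \<le> mat_norm m q A * (mat_norm q p B * nv p h)"
    by (rule mult_left_mono[OF mat_norm_facts(2)[OF B] mat_norm_facts(1)[OF A]])
  finally show "nv m (mapp p (mmul q A B) h) \<le> mat_norm m q A * mat_norm q p B * nv p h"
    by (simp add: mult.assoc)
qed

definition madj :: "(nat \<Rightarrow> nat \<Rightarrow> ('a::chilbert_space \<Rightarrow> 'b::chilbert_space)) \<Rightarrow> nat \<Rightarrow> nat \<Rightarrow> ('b \<Rightarrow> 'a)" where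
  "madj A = (\<lambda>i j. adj (A j i))"

lemma mbd_madj: "mbd m p A \<Longrightarrow> mbd p m (madj A)"
  by (simp add: mbd_def madj_def adj_bounded)

lemma ip_madj:
  assumes A: "mbd m p A"
  shows "ip m (mapp p A h) y = ip p h (mapp m (madj A) y)"
proof -
  have "ip m (mapp p A h) y = (\<Sum>i<m. \<Sum>j<p. cinner (A i j (h j)) (y i))"
    by (simp add: ip_def mapp_def cinner_sum_left)
  also have "\<dots> = (\<Sum>i<m. \<Sum>j<p. cinner (h j) (adj (A i j) (y i)))"
    using A by (intro sum.cong refl) (simp add: mbd_def adj_prop)
  also have "\<dots> = (\<Sum>j<p. \<Sum>i<m. cinner (h j) (adj (A i j) (y i)))" by (rule sum.swap)
  also have "\<dots> = ip p h (mapp m (madj A) y)"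
    by (simp add: ip_def mapp_def madj_def cinner_sum_right)
  finally show ?thesis .
qed

lemma ip_madj2:
  assumes A: "mbd m p A"
  shows "ip p (mapp m (madj A) y) h = ip m y (mapp p A h)"
  using ip_madj[OF A, of h y] by (metis ip_commute)

lemma mat_norm_madj_le:
  assumes A: "mbd m p A"
  shows "mat_norm p m (madj A) \<le> mat_norm m p A"
proof (rule mat_norm_le)
  show "0 \<le> mat_norm m p A" by (rule mat_norm_facts(1)[OF A])
  fix y
  define z where "z = mapp m (madj A) y"
  have "(nv p z)\<^sup>2 = Re (ip m (mapp p A z) y)"
    by (simp add: ip_madj[OF A] z_def Re_ip_self)
  also have "\<dots> \<le> nv m (mapp p A z) * nv m y" by (rule Re_ip_le)
  also have "\<dots> \<le> mat_norm m p A * nv p z * nv m y"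
    by (rule mult_right_mono[OF mat_norm_facts(2)[OF A] nv_nonneg])
  finally have h: "nv p z * nv p z \<le> nv p z * (mat_norm m p A * nv m y)"
    by (simp add: power2_eq_square mult_ac)
  show "nv p z \<le> mat_norm m p A * nv m y"
  proof (cases "nv p z = 0")
    case True thus ?thesis using mat_norm_facts(1)[OF A] by simp
  next
    case False
    hence "nv p z > 0" using nv_nonneg[of p z] by linarith
    thus ?thesis using h by (simp add: mult_le_cancel_left)
  qed
qed

lemma mat_norm_le_madj:
  assumes A: "mbd m p A"
  shows "mat_norm m p A \<le> mat_norm p m (madj A)"
proof (rule mat_norm_le)
  have A': "mbd p m (madj A)" by (rule mbd_madj[OF A])
  show "0 \<le> mat_norm p m (madj A)" by (rule mat_norm_facts(1)[OF A'])
  fix h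
  define z where "z = mapp p A h"
  have "(nv m z)\<^sup>2 = Re (ip p h (mapp m (madj A) z))"
    by (simp add: ip_madj[OF A, symmetric] z_def Re_ip_self)
  also have "\<dots> \<le> nv p h * nv p (mapp m (madj A) z)" by (rule Re_ip_le)
  also have "\<dots> \<le> nv p h * (mat_norm p m (madj A) * nv m z)"
    by (rule mult_left_mono[OF mat_norm_facts(2)[OF A'] nv_nonneg])
  finally have h: "nv m z * nv m z \<le> nv m z * (mat_norm p m (madj A) * nv p h)"
    by (simp add: power2_eq_square mult_ac)
  show "nv m z \<le> mat_norm p m (madj A) * nv p h"
  proof (cases "nv m z = 0")
    case True thus ?thesis using mat_norm_facts(1)[OF A'] by simp
  next
    case False
    hence "nv m z > 0" using nv_nonneg[of m z] by linarith
    thus ?thesis using h by (simp add: mult_le_cancel_left)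
  qed
qed

lemma entry_bound:
  assumes X: "mbd m p X" and i: "i < m" and k: "k < p"
  shows "norm (X i k x) \<le> mat_norm m p X * norm x"
proof -
  define e where "e = (\<lambda>j. if j = k then x else 0)"
  have "mapp p X e i = (\<Sum>j<p. if j = k then X i k x else 0)"
    unfolding mapp_def e_def
    by (intro sum.cong refl) (use X i in \<open>auto simp: mbd_clinear clinear_zero\<close>)
  also have "\<dots> = X i k x" using k by simp
  finally have me: "mapp p X e i = X i k x" .
  have ne: "nv p e = norm x"
  proof -
    have "(\<Sum>j<p. (norm (e j))\<^sup>2) = (\<Sum>j<p. if j = k then (norm x)\<^sup>2 else 0)"
      by (intro sum.cong refl) (simp add: e_def)
    also have "\<dots> = (norm x)\<^sup>2" using k by simp
    finally show ?thesis by (simp add: nv_def)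
  qed
  have "norm (X i k x) \<le> nv m (mapp p X e)" using norm_le_nv[OF i, of "mapp p X e"] me by simp
  also have "\<dots> \<le> mat_norm m p X * norm x" using mat_norm_facts(2)[OF X, of e] ne by simp
  finally show ?thesis .
qed



lemma op_norm_le:
  assumes "c \<ge> 0" "\<And>x. norm (T x) \<le> c * norm x"
  shows "op_norm T \<le> c"
  unfolding op_norm_def
proof (rule cSup_least)
  have "norm (T 0) \<in> {norm (T x) |x. norm x \<le> 1}" by auto
  thus "{norm (T x) |x. norm x \<le> 1} \<noteq> {}" by blast
  fix y assume "y \<in> {norm (T x) |x. norm x \<le> 1}"
  then obtain x where "y = norm (T x)" "norm x \<le> 1" by auto
  thus "y \<le> c" using assms by (meson mult_left_le order_trans)
qed

lemma op_norm_nonneg: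
  assumes "\<And>x. norm (T x) \<le> c * norm x" "T 0 = 0"
  shows "0 \<le> op_norm T"
  unfolding op_norm_def
proof (rule cSup_upper2)
  show "norm (T 0) \<in> {norm (T x) |x. norm x \<le> 1}" by auto
  show "0 \<le> norm (T 0)" by simp
  show "bdd_above {norm (T x) |x. norm x \<le> 1}"
  proof (rule bdd_aboveI[of _ "max c 0"])
    fix y assume "y \<in> {norm (T x) |x. norm x \<le> 1}"
    then obtain x where x: "y = norm (T x)" "norm x \<le> 1" by auto
    have "c * norm x \<le> max c 0 * norm x" by (simp add: mult_right_mono)
    also have "\<dots> \<le> max c 0" using x(2) by (simp add: mult_left_le)
    finally show "y \<le> max c 0" using assms(1)[of x] x(1) by linarith
  qed
qed

lemma tro_bounded: "is_TRO U \<Longrightarrow> u \<in> U \<Longrightarrow> bounded_op u"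
  unfolding is_TRO_def by blast
lemma tro_zero: "is_TRO U \<Longrightarrow> (\<lambda>_. 0) \<in> U"
  unfolding is_TRO_def by blast
lemma tro_add: "is_TRO U \<Longrightarrow> S \<in> U \<Longrightarrow> T \<in> U \<Longrightarrow> (\<lambda>x. S x + T x) \<in> U"
  unfolding is_TRO_def by blast
lemma tro_scaleC: "is_TRO U \<Longrightarrow> T \<in> U \<Longrightarrow> (\<lambda>x. c *\<^sub>C T x) \<in> U"
  unfolding is_TRO_def by blast
lemma tro_closed: "is_TRO U \<Longrightarrow> (\<And>k. s k \<in> U) \<Longrightarrow> bounded_op T \<Longrightarrow>
    (\<lambda>k. op_norm (\<lambda>x. s k x - T x)) \<longlonglongrightarrow> 0 \<Longrightarrow> T \<in> U"
  unfolding is_TRO_def by blast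
lemma tro_tern: "is_TRO U \<Longrightarrow> R \<in> U \<Longrightarrow> S \<in> U \<Longrightarrow> T \<in> U \<Longrightarrow> (\<lambda>x. R (adj S (T x))) \<in> U"
proof -
  assume U: "is_TRO U" and h: "R \<in> U" "S \<in> U" "T \<in> U"
  have "R \<circ> adj S \<circ> T \<in> U" using U h unfolding is_TRO_def by blast
  moreover have "R \<circ> adj S \<circ> T = (\<lambda>x. R (adj S (T x)))" by (simp add: comp_def)
  ultimately show ?thesis by simp
qed

lemma tro_sum:
  assumes U: "is_TRO U" and "finite I" and "\<And>i. i \<in> I \<Longrightarrow> F i \<in> U"
  shows "(\<lambda>x. \<Sum>i\<in>I. F i x) \<in> U"
  using assms(2,3)
proof (induction I rule: finite_induct)
  case empty thus ?case using tro_zero[OF U] by simp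
next
  case (insert a I)
  have "(\<lambda>x. F a x + (\<lambda>x. \<Sum>i\<in>I. F i x) x) \<in> U"
    by (rule tro_add[OF U]) (use insert in auto)
  thus ?case using insert by simp
qed

lemma tm_bounded: "ternary_morphism U \<phi> \<Longrightarrow> u \<in> U \<Longrightarrow> bounded_op (\<phi> u)"
  unfolding ternary_morphism_def by blast
lemma tm_add: "ternary_morphism U \<phi> \<Longrightarrow> u \<in> U \<Longrightarrow> v \<in> U \<Longrightarrow> \<phi> (\<lambda>x. u x + v x) = (\<lambda>x. \<phi> u x + \<phi> v x)"
  unfolding ternary_morphism_def by blast
lemma tm_scaleC: "ternary_morphism U \<phi> \<Longrightarrow> u \<in> U \<Longrightarrow> \<phi> (\<lambda>x. c *\<^sub>C u x) = (\<lambda>x. c *\<^sub>C \<phi> u x)"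
  unfolding ternary_morphism_def by blast
lemma tm_tern: "ternary_morphism U \<phi> \<Longrightarrow> R \<in> U \<Longrightarrow> S \<in> U \<Longrightarrow> T \<in> U \<Longrightarrow>
    \<phi> (\<lambda>x. R (adj S (T x))) = (\<lambda>x. \<phi> R (adj (\<phi> S) (\<phi> T x)))"
proof -
  assume P: "ternary_morphism U \<phi>" and h: "R \<in> U" "S \<in> U" "T \<in> U"
  have "\<phi> (R \<circ> adj S \<circ> T) = \<phi> R \<circ> adj (\<phi> S) \<circ> \<phi> T" using P h unfolding ternary_morphism_def by blast
  moreover have "R \<circ> adj S \<circ> T = (\<lambda>x. R (adj S (T x)))" by (simp add: comp_def)
  ultimately show ?thesis by (simp add: comp_def)
qed

lemma tm_zero:
  assumes U: "is_TRO U" and \<phi>: "ternary_morphism U \<phi>"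
  shows "\<phi> (\<lambda>_. 0) = (\<lambda>_. 0)"
proof -
  define z where "z = (\<lambda>_::'a. 0::'b)"
  have zU: "z \<in> U" using tro_zero[OF U] by (simp add: z_def)
  have "z = (\<lambda>x. z x + z x)" by (simp add: z_def)
  hence "\<phi> z = (\<lambda>x. \<phi> z x + \<phi> z x)" using tm_add[OF \<phi> zU zU] by metis
  hence "\<And>x. \<phi> z x = \<phi> z x + \<phi> z x" by metis
  hence "\<And>x. \<phi> z x = 0" by (metis add_cancel_left_right)
  thus ?thesis by (auto simp: z_def)
qed

lemma tm_sum:
  assumes U: "is_TRO U" and \<phi>: "ternary_morphism U \<phi>" and "finite I" and "\<And>i. i \<in> I \<Longrightarrow> F i \<in> U"
  shows "\<phi> (\<lambda>x. \<Sum>i\<in>I. F i x) = (\<lambda>x. \<Sum>i\<in>I. \<phi> (F i) x)"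
  using assms(3,4)
proof (induction I rule: finite_induct)
  case empty thus ?case using tm_zero[OF U \<phi>] by simp
next
  case (insert a I)
  have sU: "(\<lambda>x. \<Sum>i\<in>I. F i x) \<in> U" by (rule tro_sum[OF U]) (use insert in auto)
  have "(\<lambda>x. \<Sum>i\<in>insert a I. F i x) = (\<lambda>x. F a x + (\<lambda>x. \<Sum>i\<in>I. F i x) x)"
    using insert by simp
  hence "\<phi> (\<lambda>x. \<Sum>i\<in>insert a I. F i x) = (\<lambda>x. \<phi> (F a) x + \<phi> (\<lambda>x. \<Sum>i\<in>I. F i x) x)"
    using tm_add[OF \<phi> _ sU, of "F a"] insert by simp
  also have "\<dots> = (\<lambda>x. \<Sum>i\<in>insert a I. \<phi> (F i) x)" using insert by simp
  finally show ?case .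
qed

section \<open>Operator-valued series\<close>

lemma series_op:
  fixes c :: "nat \<Rightarrow> ('a::complex_normed_vector \<Rightarrow> 'b::chilbert_space)"
  assumes cb: "\<And>m. bounded_op (c m)"
    and bd: "\<And>m x. norm (c m x) \<le> B * q ^ m * norm x"
    and B: "B \<ge> 0" and q0: "0 \<le> q" and q1: "q < 1"
  shows "\<And>x. summable (\<lambda>m. c m x)"
    and "bounded_op (\<lambda>x. \<Sum>m. c m x)"
    and "(\<lambda>N. op_norm (\<lambda>x. (\<Sum>m<N. c m x) - (\<Sum>m. c m x))) \<longlonglongrightarrow> 0"
proof -
  have gs: "summable (\<lambda>m. q ^ m)" using q0 q1 by (simp add: summable_geometric)
  have gsum: "(\<Sum>m. q ^ m) = 1 / (1 - q)" using q0 q1 by (simp add: suminf_geometric)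
  have nsum: "summable (\<lambda>m. norm (c m x))" for x
  proof (rule summable_comparison_test[where g="\<lambda>m. B * norm x * q ^ m"])
    show "summable (\<lambda>m. B * norm x * q ^ m)" by (rule summable_mult[OF gs])
    show "\<exists>N. \<forall>n\<ge>N. norm (norm (c n x)) \<le> B * norm x * q ^ n"
      using bd by (simp add: mult_ac)
  qed
  show sx: "summable (\<lambda>m. c m x)" for x by (rule summable_norm_cancel[OF nsum])
  have lin: "\<And>m. clinear_map (c m)" using cb by (simp add: bounded_op_def)
  have tail: "norm (\<Sum>m. c (m + N) x) \<le> B * q ^ N / (1 - q) * norm x" for N x
  proof -
    have s1: "summable (\<lambda>m. norm (c (m + N) x))"
      using summable_ignore_initial_segment[OF nsum[of x], of N] by simp
    have "norm (\<Sum>m. c (m + N) x) \<le> (\<Sum>m. norm (c (m + N) x))" by (rule summable_norm[OF s1])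
    also have "\<dots> \<le> (\<Sum>m. B * norm x * q ^ N * q ^ m)"
    proof (rule suminf_le)
      show "norm (c (m + N) x) \<le> B * norm x * q ^ N * q ^ m" for m
        using bd[of "m + N" x] by (simp add: power_add mult_ac)
      show "summable (\<lambda>m. norm (c (m + N) x))" by (rule s1)
      show "summable (\<lambda>m. B * norm x * q ^ N * q ^ m)" by (intro summable_mult gs)
    qed
    also have "\<dots> = B * norm x * q ^ N * (1 / (1 - q))"
      using suminf_mult[OF gs, of "B * norm x * q ^ N"] gsum by simp
    finally show ?thesis by (simp add: mult_ac)
  qed
  show "bounded_op (\<lambda>x. \<Sum>m. c m x)"
  proof (rule bounded_op_intro[where K="B / (1 - q)"])
    show "(\<Sum>m. c m (x + y)) = (\<Sum>m. c m x) + (\<Sum>m. c m y)" for x y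
      by (simp add: lin clinear_add suminf_add[OF sx sx])
    show "(\<Sum>m. c m (a *\<^sub>C x)) = a *\<^sub>C (\<Sum>m. c m x)" for a x
    proof -
      have bl: "bounded_linear (\<lambda>v::'b. a *\<^sub>C v)"
      proof (rule bounded_linear_intro[where K="cmod a"])
        show "a *\<^sub>C (u + v) = a *\<^sub>C u + a *\<^sub>C v" for u v by (rule scaleC_add_right)
        show "a *\<^sub>C (r *\<^sub>R v) = r *\<^sub>R (a *\<^sub>C v)" for r v
          by (simp add: scaleR_scaleC scaleC_scaleC mult.commute)
        show "norm (a *\<^sub>C v) \<le> norm v * cmod a" for v :: 'b by (simp add: norm_scaleC mult.commute)
      qed
      show ?thesis by (simp add: lin clinear_scaleC bounded_linear.suminf[OF bl sx])
    qed
    show "norm (\<Sum>m. c m x) \<le> B / (1 - q) * norm x" for x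
      using tail[of 0 x] by simp
  qed
  show "(\<lambda>N. op_norm (\<lambda>x. (\<Sum>m<N. c m x) - (\<Sum>m. c m x))) \<longlonglongrightarrow> 0"
  proof (rule tendsto_sandwich[where f="\<lambda>_. 0" and h="\<lambda>N. B / (1 - q) * q ^ N"])
    have b: "norm ((\<Sum>m<N. c m x) - (\<Sum>m. c m x)) \<le> B / (1 - q) * q ^ N * norm x" for N x
    proof -
      have "(\<Sum>m<N. c m x) - (\<Sum>m. c m x) = - (\<Sum>m. c (m + N) x)"
        using suminf_minus_initial_segment[OF sx[of x], of N] by simp
      hence "norm ((\<Sum>m<N. c m x) - (\<Sum>m. c m x)) = norm (\<Sum>m. c (m + N) x)" by simp
      also have "\<dots> \<le> B * q ^ N / (1 - q) * norm x" using tail[of N x] by simp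
      finally show ?thesis by simp
    qed
    show "\<forall>\<^sub>F N in sequentially. 0 \<le> op_norm (\<lambda>x. (\<Sum>m<N. c m x) - (\<Sum>m. c m x))"
      by (intro always_eventually allI op_norm_nonneg[OF b]) (simp add: lin clinear_zero)
    show "\<forall>\<^sub>F N in sequentially. op_norm (\<lambda>x. (\<Sum>m<N. c m x) - (\<Sum>m. c m x)) \<le> B / (1 - q) * q ^ N"
      using q0 q1 B by (intro always_eventually allI op_norm_le b) simp
    show "(\<lambda>_. 0::real) \<longlonglongrightarrow> 0" by simp
    have "(\<lambda>N. q ^ N) \<longlonglongrightarrow> 0" using q0 q1 by (intro LIMSEQ_power_zero) simp
    thus "(\<lambda>N. B / (1 - q) * q ^ N) \<longlonglongrightarrow> 0" by (intro tendsto_mult_right_zero)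
  qed
qed



primrec Cpow :: "nat \<Rightarrow> nat \<Rightarrow> (nat \<Rightarrow> nat \<Rightarrow> ('a::chilbert_space \<Rightarrow> 'b::chilbert_space)) \<Rightarrow> nat \<Rightarrow> nat \<Rightarrow> nat \<Rightarrow> ('a \<Rightarrow> 'b)" where
  "Cpow n p X 0 = X"
| "Cpow n p X (Suc m) = mmul p X (mmul n (madj X) (Cpow n p X m))"

lemma mbd_tro: "is_TRO U \<Longrightarrow> \<forall>i<n. \<forall>k<p. X i k \<in> U \<Longrightarrow> mbd n p X"
  by (simp add: mbd_def tro_bounded)

lemma Cpow_Suc_apply:
  assumes X: "mbd n p X" and i: "i < n"
  shows "Cpow n p X (Suc m) i k x = (\<Sum>j<p. \<Sum>l<n. X i j (adj (X l j) (Cpow n p X m l k x)))"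
  using X i by (simp add: mmul_def madj_def mbd_clinear clinear_sum)

lemma Cpow_U:
  assumes U: "is_TRO U" and XU: "\<forall>i<n. \<forall>k<p. X i k \<in> U"
  shows "\<forall>i<n. \<forall>k<p. Cpow n p X m i k \<in> U"
proof (induction m)
  case 0 thus ?case using XU by simp
next
  case (Suc m)
  have X: "mbd n p X" by (rule mbd_tro[OF U XU])
  show ?case
  proof (intro allI impI)
    fix i k assume i: "i < n" and k: "k < p"
    have eq: "Cpow n p X (Suc m) i k = (\<lambda>x. \<Sum>j<p. (\<lambda>x. \<Sum>l<n. X i j (adj (X l j) (Cpow n p X m l k x))) x)"
      by (rule ext) (simp del: Cpow.simps add: Cpow_Suc_apply[OF X i])
    have "(\<lambda>x. \<Sum>j<p. (\<lambda>x. \<Sum>l<n. X i j (adj (X l j) (Cpow n p X m l k x))) x) \<in> U"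
    proof (rule tro_sum[OF U], simp)
      fix j assume j: "j \<in> {..<p}"
      show "(\<lambda>x. \<Sum>l<n. X i j (adj (X l j) (Cpow n p X m l k x))) \<in> U"
      proof (rule tro_sum[OF U], simp)
        fix l assume l: "l \<in> {..<n}"
        show "(\<lambda>x. X i j (adj (X l j) (Cpow n p X m l k x))) \<in> U"
          by (rule tro_tern[OF U]) (use XU Suc.IH i j k l in auto)
      qed
    qed
    thus "Cpow n p X (Suc m) i k \<in> U" using eq by simp
  qed
qed

lemma Cpow_mbd: "is_TRO U \<Longrightarrow> \<forall>i<n. \<forall>k<p. X i k \<in> U \<Longrightarrow> mbd n p (Cpow n p X m)"
  using Cpow_U[of U n p X m] by (simp add: mbd_def tro_bounded)

lemma Cpow_norm:
  assumes U: "is_TRO U" and XU: "\<forall>i<n. \<forall>k<p. X i k \<in> U"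
  shows "mat_norm n p (Cpow n p X m) \<le> (mat_norm n p X) ^ (2 * m + 1)"
proof (induction m)
  case 0 thus ?case by simp
next
  case (Suc m)
  have X: "mbd n p X" by (rule mbd_tro[OF U XU])
  have Xs: "mbd p n (madj X)" by (rule mbd_madj[OF X])
  have C: "mbd n p (Cpow n p X m)" by (rule Cpow_mbd[OF U XU])
  have a0: "0 \<le> mat_norm n p X" by (rule mat_norm_facts(1)[OF X])
  have "mat_norm n p (Cpow n p X (Suc m)) \<le> mat_norm n p X * mat_norm p p (mmul n (madj X) (Cpow n p X m))"
    by (simp add: mat_norm_mmul[OF X mbd_mmul[OF Xs C]])
  also have "\<dots> \<le> mat_norm n p X * (mat_norm p n (madj X) * mat_norm n p (Cpow n p X m))"
    by (rule mult_left_mono[OF mat_norm_mmul[OF Xs C] a0])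
  also have "\<dots> \<le> mat_norm n p X * (mat_norm n p X * (mat_norm n p X) ^ (2 * m + 1))"
    by (intro mult_left_mono mult_mono mat_norm_madj_le[OF X] Suc.IH a0 mat_norm_facts(1)[OF C]) 
  also have "\<dots> = (mat_norm n p X) ^ (2 * Suc m + 1)" by (simp add: power2_eq_square)
  finally show ?case .
qed

lemma neumann_U:
  fixes U :: "('h1::chilbert_space \<Rightarrow> 'k1::chilbert_space) set"
  assumes U: "is_TRO U" and XU: "\<forall>i<n. \<forall>k<p. X i k \<in> U"
    and M: "(mat_norm n p X)\<^sup>2 < M"
  shows "\<exists>L. (\<forall>i<n. \<forall>k<p. L i k \<in> U) \<and>
    (\<forall>i<n. \<forall>k<p. \<forall>x. M *\<^sub>R L i k x = X i k x + (\<Sum>j<p. \<Sum>l<n. X i j (adj (X l j) (L l k x))))"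
proof -
  define a where "a = mat_norm n p X"
  have X: "mbd n p X" by (rule mbd_tro[OF U XU])
  have a0: "0 \<le> a" by (simp add: a_def mat_norm_facts(1)[OF X])
  have M0: "0 < M" using M a0 a_def by (smt (verit) zero_le_power2)
  define r where "r = inverse M"
  have r0: "0 < r" using M0 by (simp add: r_def)
  define q where "q = r * a\<^sup>2"
  have q0: "0 \<le> q" using r0 by (simp add: q_def)
  have q1: "q < 1" using M M0 by (simp add: q_def r_def a_def field_simps)
  define B where "B = r * a"
  have B0: "0 \<le> B" using r0 a0 by (simp add: B_def)
  define c where "c = (\<lambda>i k m x. (r ^ Suc m) *\<^sub>R Cpow n p X m i k x)"
  define L where "L = (\<lambda>i k x. \<Sum>m. c i k m x)"
  have CU: "\<And>m i k. i < n \<Longrightarrow> k < p \<Longrightarrow> Cpow n p X m i k \<in> U" using Cpow_U[OF U XU] by blast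
  have Cb: "\<And>m i k. i < n \<Longrightarrow> k < p \<Longrightarrow> bounded_op (Cpow n p X m i k)" using CU tro_bounded[OF U] by blast
  have cU: "(c i k m) \<in> U" if "i < n" "k < p" for i k m
  proof -
    have "(\<lambda>x. complex_of_real (r ^ Suc m) *\<^sub>C Cpow n p X m i k x) \<in> U"
      by (rule tro_scaleC[OF U CU[OF that]])
    thus ?thesis by (simp only: c_def scaleC_real)
  qed
  have cb: "bounded_op (c i k m)" if "i < n" "k < p" for i k m
    by (rule tro_bounded[OF U cU[OF that]])
  have cbd: "norm (c i k m x) \<le> B * q ^ m * norm x" if ik: "i < n" "k < p" for i k m x
  proof -
    have "norm (Cpow n p X m i k x) \<le> mat_norm n p (Cpow n p X m) * norm x"
      by (rule entry_bound[OF Cpow_mbd[OF U XU] ik])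
    also have "\<dots> \<le> a ^ (2 * m + 1) * norm x"
      by (rule mult_right_mono) (use Cpow_norm[OF U XU, of m] a_def in auto)
    finally have "r ^ Suc m * norm (Cpow n p X m i k x) \<le> r ^ Suc m * (a ^ (2 * m + 1) * norm x)"
      using r0 by (intro mult_left_mono) auto
    also have "\<dots> = B * q ^ m * norm x"
    proof -
      have e: "a ^ (2 * m + 1) = a * (a\<^sup>2) ^ m" by (simp add: power_mult)
      show ?thesis unfolding e by (simp only: B_def q_def power_mult_distrib power_Suc mult_ac)
    qed
    finally show ?thesis using r0 by (simp add: c_def)
  qed
  have Lb: "bounded_op (L i k)" if "i < n" "k < p" for i k
    unfolding L_def by (rule series_op(2)[where c="c i k", OF cb[OF that] cbd[OF that] B0 q0 q1])
  have csum: "summable (\<lambda>m. c i k m x)" if "i < n" "k < p" for i k x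
    by (rule series_op(1)[where c="c i k", OF cb[OF that] cbd[OF that] B0 q0 q1])
  have ser3: "(\<lambda>N. op_norm (\<lambda>x. (\<Sum>m<N. c i k m x) - (\<Sum>m. c i k m x))) \<longlonglongrightarrow> 0" if "i < n" "k < p" for i k
    by (rule series_op(3)[where c="c i k", OF cb[OF that] cbd[OF that] B0 q0 q1])
  have LU: "\<forall>i<n. \<forall>k<p. L i k \<in> U"
  proof (intro allI impI)
    fix i k assume ik: "i < n" "k < p"
    show "L i k \<in> U"
    proof (rule tro_closed[OF U _ Lb[OF ik]])
      show "(\<lambda>N x. \<Sum>m<N. c i k m x) N \<in> U" for N
        by (rule tro_sum[OF U]) (auto intro: cU[OF ik])
      show "(\<lambda>N. op_norm (\<lambda>x. (\<lambda>N x. \<Sum>m<N. c i k m x) N x - L i k x)) \<longlonglongrightarrow> 0"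
        unfolding L_def using ser3[OF ik] by simp
    qed
  qed
  have ident: "M *\<^sub>R L i k x = X i k x + (\<Sum>j<p. \<Sum>l<n. X i j (adj (X l j) (L l k x)))"
    if ik: "i < n" "k < p" for i k x
  proof -
    define f where "f = (\<lambda>m. M *\<^sub>R c i k m x)"
    have fs: "summable f" unfolding f_def by (intro summable_scaleR_right csum[OF ik])
    have f0: "f 0 = X i k x" using M0 by (simp add: f_def c_def r_def)
    define G where "G = (\<lambda>j l v. X i j (adj (X l j) v))"
    have Gb: "bounded_linear (G j l)" if "j < p" "l < n" for j l
    proof -
      have b: "bounded_op (X i j)" "bounded_op (X l j)" using XU tro_bounded[OF U] that ik by auto
      show ?thesis unfolding G_def by (rule bounded_op_linear[OF bounded_op_comp[OF b(1) adj_bounded[OF b(2)]]])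
    qed
    have fS: "f (Suc m) = (\<Sum>j<p. \<Sum>l<n. G j l (c l k m x))" for m
    proof -
      have "f (Suc m) = (r ^ Suc m) *\<^sub>R Cpow n p X (Suc m) i k x"
        using M0 by (simp add: f_def c_def r_def)
      also have "\<dots> = (r ^ Suc m) *\<^sub>R (\<Sum>j<p. \<Sum>l<n. X i j (adj (X l j) (Cpow n p X m l k x)))"
        by (simp del: Cpow.simps add: Cpow_Suc_apply[OF X ik(1)])
      also have "\<dots> = (\<Sum>j<p. \<Sum>l<n. G j l (c l k m x))"
        unfolding scaleR_sum_right G_def c_def
      proof (intro sum.cong refl)
        fix j l assume j: "j \<in> {..<p}" and l: "l \<in> {..<n}"
        have bX: "bounded_op (X i j)" "bounded_op (X l j)" using XU tro_bounded[OF U] ik j l by auto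
        show "(r ^ Suc m) *\<^sub>R X i j (adj (X l j) (Cpow n p X m l k x)) =
              X i j (adj (X l j) ((r ^ Suc m) *\<^sub>R Cpow n p X m l k x))"
          using bX adj_bounded[OF bX(2)] by (simp add: bounded_opD clinear_scaleR)
      qed
      finally show ?thesis .
    qed
    have GS: "summable (\<lambda>m. G j l (c l k m x))" if "j < p" "l < n" for j l
      by (rule bounded_linear.summable[OF Gb[OF that] csum[OF that(2) ik(2)]])
    have "M *\<^sub>R L i k x = suminf f"
      unfolding L_def f_def by (rule suminf_scaleR_right[OF csum[OF ik]])
    also have "\<dots> = f 0 + (\<Sum>m. f (Suc m))" using suminf_split_head[OF fs] by simp
    also have "(\<Sum>m. f (Suc m)) = (\<Sum>m. \<Sum>j<p. \<Sum>l<n. G j l (c l k m x))" by (simp add: fS)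
    also have "\<dots> = (\<Sum>j<p. \<Sum>m. \<Sum>l<n. G j l (c l k m x))"
      by (rule suminf_sum) (auto intro!: summable_sum GS)
    also have "\<dots> = (\<Sum>j<p. \<Sum>l<n. \<Sum>m. G j l (c l k m x))"
      by (intro sum.cong refl suminf_sum) (auto intro!: GS)
    also have "\<dots> = (\<Sum>j<p. \<Sum>l<n. G j l (L l k x))"
      unfolding L_def
    proof (intro sum.cong refl)
      fix j l assume j: "j \<in> {..<p}" and l: "l \<in> {..<n}"
      show "(\<Sum>m. G j l (c l k m x)) = G j l (\<Sum>m. c l k m x)"
        using bounded_linear.suminf[OF Gb csum, of j l l k x] j l ik by simp
    qed
    finally show ?thesis using f0 by (simp add: G_def)
  qed
  show ?thesis using LU ident by blast
qed



lemma ip_diff_left: "ip p (\<lambda>j. a j - b j) y = ip p a y - ip p b y"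
  by (simp add: ip_def cinner_diff_left sum_subtractf)
lemma ip_diff_right: "ip p y (\<lambda>j. a j - b j) = ip p y a - ip p y b"
  by (simp add: ip_def cinner_diff_right sum_subtractf)
lemma ip_scaleR_left: "ip p (\<lambda>j. r *\<^sub>R a j) y = complex_of_real r * ip p a y"
  by (simp add: ip_def scaleC_real[symmetric] cinner_scaleC_left sum_distrib_left)
lemma ip_scaleR_right: "ip p y (\<lambda>j. r *\<^sub>R a j) = complex_of_real r * ip p y a"
  by (simp add: ip_def scaleC_real[symmetric] cinner_scaleC_right sum_distrib_left)
lemma ip_cong: "(\<And>j. j < p \<Longrightarrow> a j = b j) \<Longrightarrow> ip p a y = ip p b y"
  by (simp add: ip_def)

lemma final_arith:
  fixes t M E :: real
  assumes M: "0 < M" and E: "0 \<le> E" and h: "t\<^sup>2 \<le> E * (2 * M\<^sup>2 - 2 * M * t)"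
    and lo: "(1 - 1 / (8 * E + 8)) * M < t" and hi: "t \<le> M"
  shows False
proof -
  have d: "0 < 8 * E + 8" using E by simp
  have i8: "1 / (8 * E + 8) \<le> 1 / 8" using E by (simp add: frac_le)
  have t78: "7 / 8 * M < t"
  proof -
    have "7 / 8 * M \<le> (1 - 1 / (8 * E + 8)) * M" using i8 M by (intro mult_right_mono) auto
    thus ?thesis using lo by linarith
  qed
  have "M - t < M / (8 * E + 8)"
  proof -
    have "(1 - 1 / (8 * E + 8)) * M = M - M / (8 * E + 8)" by (simp add: algebra_simps)
    thus ?thesis using lo by linarith
  qed
  hence "2 * E * M * (M - t) \<le> 2 * E * M * (M / (8 * E + 8))"
    using E M by (intro mult_left_mono) auto
  also have "\<dots> = M\<^sup>2 * (2 * E / (8 * E + 8))" by (simp add: power2_eq_square)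
  also have "\<dots> \<le> M\<^sup>2 * (1 / 4)"
  proof (rule mult_left_mono)
    show "2 * E / (8 * E + 8) \<le> 1 / 4" using d by (simp add: field_simps)
  qed simp
  finally have r: "E * (2 * M\<^sup>2 - 2 * M * t) \<le> M\<^sup>2 / 4" by (simp add: algebra_simps power2_eq_square)
  have "(7 / 8 * M)\<^sup>2 < t\<^sup>2" using t78 M by (intro power_strict_mono) auto
  hence "49 / 64 * M\<^sup>2 < t\<^sup>2" by (simp add: power2_eq_square)
  moreover have "0 < M\<^sup>2" using M by simp
  ultimately show False using h r by linarith
qed

lemma key_ineq:
  fixes T R :: "nat \<Rightarrow> nat \<Rightarrow> ('h::chilbert_space \<Rightarrow> 'h)"
  assumes T: "mbd n p T" and R: "mbd n p R"
    and ident: "\<forall>i<n. \<forall>k<p. \<forall>x. M *\<^sub>R R i k x = T i k x + (\<Sum>j<p. \<Sum>l<n. T i j (adj (T l j) (R l k x)))"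
    and Mdef: "M = (mat_norm n p T)\<^sup>2"
    and y: "nv n y \<le> 1"
  shows "((nv p (mapp n (madj T) y))\<^sup>2)\<^sup>2 \<le> (mat_norm n p R * mat_norm n p T)\<^sup>2 * (2 * M\<^sup>2 - 2 * M * (nv p (mapp n (madj T) y))\<^sup>2)"
    and "(nv p (mapp n (madj T) y))\<^sup>2 \<le> M"
proof -
  define s where "s = mat_norm n p T"
  define Ts where "Ts = madj T"
  have Tsb: "mbd p n Ts" unfolding Ts_def by (rule mbd_madj[OF T])
  have s0: "0 \<le> s" unfolding s_def by (rule mat_norm_facts(1)[OF T])
  have sTs: "mat_norm p n Ts \<le> s" unfolding Ts_def s_def by (rule mat_norm_madj_le[OF T])
  have M0: "0 \<le> M" by (simp add: Mdef)
  have Ms: "M = s * s" by (simp add: Mdef s_def power2_eq_square)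
  define z where "z = mapp n Ts y"
  define w where "w = mapp p R z"
  define Sy where "Sy = mapp p T z"
  define t where "t = (nv p z)\<^sup>2"
  have t0: "0 \<le> t" by (simp add: t_def)
  have nz: "nv p z \<le> s"
  proof -
    have "nv p z \<le> mat_norm p n Ts * nv n y" unfolding z_def by (rule mat_norm_facts(2)[OF Tsb])
    also have "\<dots> \<le> s * 1" using sTs y s0 mat_norm_facts(1)[OF Tsb] by (intro mult_mono) auto
    finally show ?thesis by simp
  qed
  have tM: "t \<le> M" unfolding t_def Ms using mult_mono[OF nz nz s0 nv_nonneg] by (simp add: power2_eq_square)
  have Tb: "\<And>i j. i < n \<Longrightarrow> j < p \<Longrightarrow> bounded_op (T i j)" using T by (simp add: mbd_def)
  have Sy_eq: "Sy i = M *\<^sub>R w i - mapp p T (mapp n Ts w) i" if i: "i < n" for i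
  proof -
    have "M *\<^sub>R w i = (\<Sum>k<p. M *\<^sub>R R i k (z k))" by (simp add: w_def mapp_def scaleR_sum_right)
    also have "\<dots> = (\<Sum>k<p. T i k (z k) + (\<Sum>j<p. \<Sum>l<n. T i j (adj (T l j) (R l k (z k)))))"
      using ident i by (intro sum.cong refl) auto
    also have "\<dots> = Sy i + (\<Sum>k<p. \<Sum>j<p. \<Sum>l<n. T i j (adj (T l j) (R l k (z k))))"
      by (simp add: sum.distrib Sy_def mapp_def)
    also have "(\<Sum>k<p. \<Sum>j<p. \<Sum>l<n. T i j (adj (T l j) (R l k (z k)))) =
               (\<Sum>j<p. \<Sum>k<p. \<Sum>l<n. T i j (adj (T l j) (R l k (z k))))" by (rule sum.swap)
    also have "\<dots> = (\<Sum>j<p. \<Sum>l<n. \<Sum>k<p. T i j (adj (T l j) (R l k (z k))))"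
      by (intro sum.cong refl sum.swap)
    also have "\<dots> = mapp p T (mapp n Ts w) i"
      unfolding mapp_def Ts_def madj_def w_def
    proof (intro sum.cong refl)
      fix j assume j: "j \<in> {..<p}"
      have Tij: "bounded_op (T i j)" using Tb i j by auto
      have "(\<Sum>l<n. \<Sum>k<p. T i j (adj (T l j) (R l k (z k)))) = (\<Sum>l<n. T i j (adj (T l j) (\<Sum>k<p. R l k (z k))))"
      proof (intro sum.cong refl)
        fix l assume l: "l \<in> {..<n}"
        have "bounded_op (adj (T l j))" using Tb l j adj_bounded by auto
        thus "(\<Sum>k<p. T i j (adj (T l j) (R l k (z k)))) = T i j (adj (T l j) (\<Sum>k<p. R l k (z k)))"
          using Tij by (simp add: bounded_opD clinear_sum)
      qed
      also have "\<dots> = T i j (\<Sum>l<n. adj (T l j) (\<Sum>k<p. R l k (z k)))"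
        using Tij by (simp add: bounded_opD clinear_sum)
      finally show "(\<Sum>l<n. \<Sum>k<p. T i j (adj (T l j) (R l k (z k)))) = T i j (\<Sum>l<n. adj (T l j) (\<Sum>k<p. R l k (z k)))" .
    qed
    finally show ?thesis by (simp add: algebra_simps)
  qed
  have b: "ip n Sy y = complex_of_real t"
  proof -
    have "ip n Sy y = ip p z (mapp n Ts y)" unfolding Sy_def Ts_def by (rule ip_madj[OF T])
    thus ?thesis by (simp add: z_def[symmetric] ip_self t_def)
  qed
  have c: "ip n (mapp p T (mapp n Ts w)) y = ip n w Sy"
  proof -
    have "ip n (mapp p T (mapp n Ts w)) y = ip p (mapp n Ts w) (mapp n Ts y)" unfolding Ts_def by (rule ip_madj[OF T])
    also have "\<dots> = ip n w Sy" unfolding Ts_def Sy_def z_def by (rule ip_madj2[OF T])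
    finally show ?thesis .
  qed
  define v where "v = (\<lambda>i. M *\<^sub>R y i - Sy i)"
  have d: "ip n w v = complex_of_real t"
  proof -
    have "ip n Sy y = ip n (\<lambda>i. M *\<^sub>R w i - mapp p T (mapp n Ts w) i) y"
      by (rule ip_cong) (rule Sy_eq)
    also have "\<dots> = complex_of_real M * ip n w y - ip n w Sy"
      by (simp add: ip_diff_left ip_scaleR_left c)
    also have "\<dots> = ip n w v"
      unfolding v_def by (simp add: ip_diff_right ip_scaleR_right)
    finally show ?thesis using b by simp
  qed
  have e: "t \<le> nv n w * nv n v"
    using Re_ip_le[of n w v] d by simp
  define D where "D = mat_norm n p R * s"
  have D0: "0 \<le> D" unfolding D_def using mat_norm_facts(1)[OF R] s0 by simp
  have f: "nv n w \<le> D"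
  proof -
    have "nv n w \<le> mat_norm n p R * nv p z" unfolding w_def by (rule mat_norm_facts(2)[OF R])
    also have "\<dots> \<le> mat_norm n p R * s" using nz mat_norm_facts(1)[OF R] by (rule mult_left_mono)
    finally show ?thesis by (simp add: D_def)
  qed
  have nSy: "nv n Sy \<le> M"
  proof -
    have "nv n Sy \<le> s * nv p z" unfolding Sy_def s_def by (rule mat_norm_facts(2)[OF T])
    also have "\<dots> \<le> s * s" using nz s0 by (rule mult_left_mono)
    finally show ?thesis by (simp add: Ms)
  qed
  have g: "(nv n v)\<^sup>2 \<le> 2 * M\<^sup>2 - 2 * M * t"
  proof -
    have "(nv n v)\<^sup>2 = (nv n (\<lambda>i. M *\<^sub>R y i))\<^sup>2 + (nv n Sy)\<^sup>2 - 2 * Re (ip n (\<lambda>i. M *\<^sub>R y i) Sy)"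
      unfolding v_def by (rule nv_diff_sq)
    also have "ip n (\<lambda>i. M *\<^sub>R y i) Sy = complex_of_real M * ip n y Sy" by (rule ip_scaleR_left)
    also have "ip n y Sy = complex_of_real t" by (simp add: ip_commute[of n y Sy] b)
    also have "nv n (\<lambda>i. M *\<^sub>R y i) = M * nv n y" using M0 by (simp add: nv_scaleR)
    finally have eq: "(nv n v)\<^sup>2 = (M * nv n y)\<^sup>2 + (nv n Sy)\<^sup>2 - 2 * M * t" by simp
    have "(M * nv n y)\<^sup>2 \<le> M\<^sup>2"
    proof -
      have "M * nv n y \<le> M" using M0 y by (simp add: mult_left_le)
      thus ?thesis using M0 by (simp add: power_mono)
    qed
    moreover have "(nv n Sy)\<^sup>2 \<le> M\<^sup>2" using nSy by (simp add: power_mono)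
    ultimately show ?thesis using eq by simp
  qed
  have h: "t \<le> D * nv n v"
    using e f by (meson mult_right_mono nv_nonneg order_trans)
  have "t\<^sup>2 \<le> (D * nv n v)\<^sup>2" using h t0 by (simp add: power_mono)
  also have "\<dots> = D\<^sup>2 * (nv n v)\<^sup>2" by (simp add: power_mult_distrib)
  also have "\<dots> \<le> D\<^sup>2 * (2 * M\<^sup>2 - 2 * M * t)" using g by (simp add: mult_left_mono)
  finally show "((nv p (mapp n (madj T) y))\<^sup>2)\<^sup>2 \<le> (mat_norm n p R * mat_norm n p T)\<^sup>2 * (2 * M\<^sup>2 - 2 * M * (nv p (mapp n (madj T) y))\<^sup>2)"
    by (simp add: t_def z_def Ts_def D_def s_def)
  show "(nv p (mapp n (madj T) y))\<^sup>2 \<le> M" using tM by (simp add: t_def z_def Ts_def)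
qed



lemma tm_contractive:
  fixes U :: "('h1::chilbert_space \<Rightarrow> 'k1::chilbert_space) set"
    and \<phi> :: "('h1 \<Rightarrow> 'k1) \<Rightarrow> ('h::chilbert_space \<Rightarrow> 'h)"
  assumes U: "is_TRO U" and \<phi>: "ternary_morphism U \<phi>" and XU: "\<forall>i<n. \<forall>k<p. X i k \<in> U"
  shows "mat_norm n p (\<lambda>i k. \<phi> (X i k)) \<le> mat_norm n p X"
proof (rule ccontr)
  define a where "a = mat_norm n p X"
  define T where "T = (\<lambda>i k. \<phi> (X i k))"
  define s where "s = mat_norm n p T"
  assume "\<not> mat_norm n p (\<lambda>i k. \<phi> (X i k)) \<le> mat_norm n p X"
  hence as: "a < s" by (simp add: a_def s_def T_def)
  have X: "mbd n p X" by (rule mbd_tro[OF U XU])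
  have a0: "0 \<le> a" by (simp add: a_def mat_norm_facts(1)[OF X])
  have s0: "0 < s" using as a0 by simp
  define M where "M = s\<^sup>2"
  have M0: "0 < M" using s0 by (simp add: M_def)
  have aM: "(mat_norm n p X)\<^sup>2 < M" unfolding M_def a_def[symmetric]
    using as a0 by (intro power_strict_mono) auto
  obtain L where LU: "\<forall>i<n. \<forall>k<p. L i k \<in> U"
    and ident: "\<forall>i<n. \<forall>k<p. \<forall>x. M *\<^sub>R L i k x = X i k x + (\<Sum>j<p. \<Sum>l<n. X i j (adj (X l j) (L l k x)))"
    using neumann_U[OF U XU aM] by blast
  define R where "R = (\<lambda>i k. \<phi> (L i k))"
  have Tb: "mbd n p T" using XU tm_bounded[OF \<phi>] by (simp add: mbd_def T_def)
  have Rb: "mbd n p R" using LU tm_bounded[OF \<phi>] by (simp add: mbd_def R_def)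
  have Hident: "\<forall>i<n. \<forall>k<p. \<forall>x. M *\<^sub>R R i k x = T i k x + (\<Sum>j<p. \<Sum>l<n. T i j (adj (T l j) (R l k x)))"
  proof (intro allI impI)
    fix i k x assume i: "i < n" and k: "k < p"
    define Fjl where "Fjl = (\<lambda>j l. (\<lambda>x. X i j (adj (X l j) (L l k x))))"
    define Fj where "Fj = (\<lambda>j. (\<lambda>x. \<Sum>l<n. Fjl j l x))"
    define F where "F = (\<lambda>x. \<Sum>j<p. Fj j x)"
    have FjlU: "Fjl j l \<in> U" if "j < p" "l < n" for j l
      unfolding Fjl_def by (rule tro_tern[OF U]) (use XU LU i k that in auto)
    have FjU: "Fj j \<in> U" if "j < p" for j
      unfolding Fj_def by (rule tro_sum[OF U]) (use FjlU that in auto)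
    have FU: "F \<in> U" unfolding F_def by (rule tro_sum[OF U]) (use FjU in auto)
    have LikU: "L i k \<in> U" using LU i k by auto
    have XikU: "X i k \<in> U" using XU i k by auto
    have e1: "(\<lambda>x. complex_of_real M *\<^sub>C L i k x) = (\<lambda>x. X i k x + F x)"
      using ident i k by (auto simp: scaleC_real F_def Fj_def Fjl_def)
    have "\<phi> (\<lambda>x. complex_of_real M *\<^sub>C L i k x) = (\<lambda>x. complex_of_real M *\<^sub>C R i k x)"
      unfolding R_def by (rule tm_scaleC[OF \<phi> LikU])
    moreover have "\<phi> (\<lambda>x. X i k x + F x) = (\<lambda>x. T i k x + \<phi> F x)"
      unfolding T_def by (rule tm_add[OF \<phi> XikU FU])
    moreover have "\<phi> F = (\<lambda>x. \<Sum>j<p. \<Sum>l<n. T i j (adj (T l j) (R l k x)))"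
    proof -
      have "\<phi> F = (\<lambda>x. \<Sum>j<p. \<phi> (Fj j) x)" unfolding F_def by (rule tm_sum[OF U \<phi>]) (use FjU in auto)
      also have "\<dots> = (\<lambda>x. \<Sum>j<p. \<Sum>l<n. \<phi> (Fjl j l) x)"
      proof (intro ext sum.cong refl)
        fix x j assume j: "j \<in> {..<p}"
        have "\<phi> (Fj j) = (\<lambda>x. \<Sum>l<n. \<phi> (Fjl j l) x)" unfolding Fj_def
          by (rule tm_sum[OF U \<phi>]) (use FjlU j in auto)
        thus "\<phi> (Fj j) x = (\<Sum>l<n. \<phi> (Fjl j l) x)" by simp
      qed
      also have "\<dots> = (\<lambda>x. \<Sum>j<p. \<Sum>l<n. T i j (adj (T l j) (R l k x)))"
      proof (intro ext sum.cong refl)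
        fix x j l assume j: "j \<in> {..<p}" and l: "l \<in> {..<n}"
        have "\<phi> (Fjl j l) = (\<lambda>x. \<phi> (X i j) (adj (\<phi> (X l j)) (\<phi> (L l k) x)))" unfolding Fjl_def
          by (rule tm_tern[OF \<phi>]) (use XU LU i k j l in auto)
        thus "\<phi> (Fjl j l) x = T i j (adj (T l j) (R l k x))" by (simp add: T_def R_def)
      qed
      finally show ?thesis .
    qed
    ultimately have "(\<lambda>x. complex_of_real M *\<^sub>C R i k x) = (\<lambda>x. T i k x + (\<Sum>j<p. \<Sum>l<n. T i j (adj (T l j) (R l k x))))"
      using e1 by simp
    hence "complex_of_real M *\<^sub>C R i k x = T i k x + (\<Sum>j<p. \<Sum>l<n. T i j (adj (T l j) (R l k x)))"
      by metis
    thus "M *\<^sub>R R i k x = T i k x + (\<Sum>j<p. \<Sum>l<n. T i j (adj (T l j) (R l k x)))"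
      by (simp add: scaleC_real)
  qed
  have Mdef: "M = (mat_norm n p T)\<^sup>2" by (simp add: M_def s_def)
  define E where "E = (mat_norm n p R * mat_norm n p T)\<^sup>2"
  have E0: "0 \<le> E" by (simp add: E_def)
  define \<theta> where "\<theta> = 1 - 1 / (8 * E + 8)"
  have th0: "0 \<le> \<theta>" using E0 by (simp add: \<theta>_def field_simps)
  have th1: "\<theta> < 1" using E0 by (simp add: \<theta>_def)
  define S where "S = {nv p (mapp n (madj T) y) | y. nv n y \<le> 1}"
  have SupS: "s \<le> Sup S"
    using mat_norm_le_madj[OF Tb] by (simp add: S_def mat_norm_alt s_def)
  have Sne: "S \<noteq> {}"
  proof -
    have "nv n (\<lambda>_. 0::'h) \<le> 1" by (simp add: nv_def)
    thus ?thesis unfolding S_def by blast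
  qed
  have "sqrt \<theta> * s < s" using th0 th1 s0 by (simp add: real_sqrt_less_iff[of \<theta> 1, simplified])
  hence "sqrt \<theta> * s < Sup S" using SupS by linarith
  then obtain y where y: "nv n y \<le> 1" and yz: "sqrt \<theta> * s < nv p (mapp n (madj T) y)"
    using less_cSupD[OF Sne] unfolding S_def by blast
  define t where "t = (nv p (mapp n (madj T) y))\<^sup>2"
  have k1: "t\<^sup>2 \<le> E * (2 * M\<^sup>2 - 2 * M * t)"
    using key_ineq(1)[OF Tb Rb Hident Mdef y] by (simp add: t_def E_def)
  have k2: "t \<le> M" using key_ineq(2)[OF Tb Rb Hident Mdef y] by (simp add: t_def)
  have "(sqrt \<theta> * s)\<^sup>2 < t" unfolding t_def using yz th0 s0
    by (intro power_strict_mono) auto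
  hence lo: "\<theta> * M < t" using th0 by (simp add: power_mult_distrib M_def)
  show False by (rule final_arith[OF M0 E0 k1 _ k2]) (use lo in \<open>simp add: \<theta>_def\<close>)
qed



lemma my_sum_list_concat: "sum_list (concat xss) = sum_list (map sum_list xss)"
  by (induction xss) auto

lemma sum_list_nth_sum: "sum_list (map g xs) = (\<Sum>k<length xs. g (xs ! k))"
  by (simp add: sum_list_sum_nth atLeast0LessThan)

lemma cinner_sum_list_right: "cinner z (sum_list (map g xs)) = sum_list (map (\<lambda>a. cinner z (g a)) xs)"
  by (induction xs) (auto simp: cinner_add_right)

lemma mat_norm_cong:
  assumes "\<And>i j. i < m \<Longrightarrow> j < p \<Longrightarrow> X i j = Y i j"
  shows "mat_norm m p X = mat_norm m p Y"
proof -
  have "nv m (mapp p X h) = nv m (mapp p Y h)" for h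
    by (rule nv_cong) (simp add: mapp_def assms)
  thus ?thesis by (simp add: mat_norm_alt)
qed

lemma bil_zero_left: "bilinear_fun U V f \<Longrightarrow> (\<lambda>_. 0) \<in> U \<Longrightarrow> v \<in> V \<Longrightarrow> f (\<lambda>_. 0) v = 0"
proof -
  assume f: "bilinear_fun U V f" and z: "(\<lambda>_. 0) \<in> U" and v: "v \<in> V"
  have h: "\<forall>u1\<in>U. \<forall>u2\<in>U. \<forall>v\<in>V. f (\<lambda>x. u1 x + u2 x) v = f u1 v + f u2 v"
    using f unfolding bilinear_fun_def by blast
  show ?thesis using bspec[OF bspec[OF bspec[OF h z] z] v] by simp
qed

lemma bil_zero_right: "bilinear_fun U V f \<Longrightarrow> (\<lambda>_. 0) \<in> V \<Longrightarrow> u \<in> U \<Longrightarrow> f u (\<lambda>_. 0) = 0"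
proof -
  assume f: "bilinear_fun U V f" and z: "(\<lambda>_. 0) \<in> V" and u: "u \<in> U"
  have h: "\<forall>u\<in>U. \<forall>v1\<in>V. \<forall>v2\<in>V. f u (\<lambda>x. v1 x + v2 x) = f u v1 + f u v2"
    using f unfolding bilinear_fun_def by blast
  show ?thesis using bspec[OF bspec[OF bspec[OF h u] z] z] by simp
qed

lemma tensor_map_eq:
  fixes U :: "('h1::chilbert_space \<Rightarrow> 'k1::chilbert_space) set"
    and V :: "('h2::chilbert_space \<Rightarrow> 'k2::chilbert_space) set"
    and \<phi> :: "('h1 \<Rightarrow> 'k1) \<Rightarrow> ('h::chilbert_space \<Rightarrow> 'h)"
    and \<psi> :: "('h2 \<Rightarrow> 'k2) \<Rightarrow> ('h \<Rightarrow> 'h)"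
  assumes \<phi>: "ternary_morphism U \<phi>" and \<psi>: "ternary_morphism V \<psi>"
    and XU: "\<forall>k<p. X i k \<in> U" and YV: "\<forall>k<p. Y k j \<in> V"
    and te: "tensor_eq U V (hprod p X Y i j) w"
  shows "tensor_map \<phi> \<psi> w = (\<lambda>x. \<Sum>k<p. \<phi> (X i k) (\<psi> (Y k j) x))"
proof (rule ext, rule cinner_eqI)
  fix x z
  define f where "f = (\<lambda>u v. cinner z (\<phi> u (\<psi> v x)))"
  have bil: "bilinear_fun U V f"
    unfolding bilinear_fun_def f_def
  proof (intro conjI ballI allI)
    fix u1 u2 v assume "u1 \<in> U" "u2 \<in> U" "v \<in> V"
    thus "cinner z (\<phi> (\<lambda>x. u1 x + u2 x) (\<psi> v x)) = cinner z (\<phi> u1 (\<psi> v x)) + cinner z (\<phi> u2 (\<psi> v x))"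
      by (simp add: tm_add[OF \<phi>] cinner_add_right)
  next
    fix c u v assume "u \<in> U" "v \<in> V"
    thus "cinner z (\<phi> (\<lambda>x. c *\<^sub>C u x) (\<psi> v x)) = c * cinner z (\<phi> u (\<psi> v x))"
      by (simp add: tm_scaleC[OF \<phi>] cinner_scaleC_right)
  next
    fix u v1 v2 assume "u \<in> U" "v1 \<in> V" "v2 \<in> V"
    thus "cinner z (\<phi> u (\<psi> (\<lambda>x. v1 x + v2 x) x)) = cinner z (\<phi> u (\<psi> v1 x)) + cinner z (\<phi> u (\<psi> v2 x))"
      by (simp add: tm_add[OF \<psi>] clinear_add[OF bounded_opD[OF tm_bounded[OF \<phi>]]] cinner_add_right)
  next
    fix c u v assume "u \<in> U" "v \<in> V"
    thus "cinner z (\<phi> u (\<psi> (\<lambda>x. c *\<^sub>C v x) x)) = c * cinner z (\<phi> u (\<psi> v x))"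
      by (simp add: tm_scaleC[OF \<psi>] clinear_scaleC[OF bounded_opD[OF tm_bounded[OF \<phi>]]] cinner_scaleC_right)
  qed
  have "(\<Sum>(u,v)\<leftarrow>hprod p X Y i j. f u v) = (\<Sum>(u,v)\<leftarrow>w. f u v)"
    using te bil unfolding tensor_eq_def by blast
  moreover have "(\<Sum>(u,v)\<leftarrow>hprod p X Y i j. f u v) = (\<Sum>k<p. f (X i k) (Y k j))"
    by (simp add: hprod_def comp_def interv_sum_list_conv_sum_set_nat atLeast0LessThan)
  moreover have "cinner z (tensor_map \<phi> \<psi> w x) = (\<Sum>(u,v)\<leftarrow>w. f u v)"
    unfolding tensor_map_def f_def by (simp add: cinner_sum_list_right case_prod_unfold)
  ultimately show "cinner z (tensor_map \<phi> \<psi> w x) = cinner z (\<Sum>k<p. \<phi> (X i k) (\<psi> (Y k j) x))"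
    by (simp add: f_def cinner_sum_right)
qed

lemma decomp_exists:
  fixes U :: "('h1::chilbert_space \<Rightarrow> 'k1::chilbert_space) set"
    and V :: "('h2::chilbert_space \<Rightarrow> 'k2::chilbert_space) set"
  assumes U: "is_TRO U" and V: "is_TRO V"
    and W: "\<forall>i<n. \<forall>j<n. set (W i j) \<subseteq> U \<times> V"
  shows "\<exists>p X Y. (\<forall>i<n. \<forall>k<p. X i k \<in> U) \<and> (\<forall>k<p. \<forall>j<n. Y k j \<in> V) \<and>
      (\<forall>i<n. \<forall>j<n. tensor_eq U V (hprod p X Y i j) (W i j))"
proof -
  define PL where "PL = List.product [0..<n] [0..<n]"
  define Z where "Z = concat (map (\<lambda>(a,b). map (\<lambda>uv. (a, b, uv)) (W a b)) PL)"
  define p where "p = length Z"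
  define X where "X = (\<lambda>i k. if fst (Z ! k) = i then fst (snd (snd (Z ! k))) else (\<lambda>_. 0))"
  define Y where "Y = (\<lambda>k j. if fst (snd (Z ! k)) = j then snd (snd (snd (Z ! k))) else (\<lambda>_. 0))"
  have Zmem: "fst e < n \<and> fst (snd e) < n \<and> snd (snd e) \<in> U \<times> V" if ez: "e \<in> set Z" for e
  proof -
    obtain a b uv where e: "e = (a, b, uv)" "a < n" "b < n" "uv \<in> set (W a b)"
      using ez by (auto simp: Z_def PL_def)
    thus ?thesis using W by auto
  qed
  have XU: "\<forall>i<n. \<forall>k<p. X i k \<in> U"
    using Zmem tro_zero[OF U] by (auto simp: X_def p_def mem_Times_iff)
  have YV: "\<forall>k<p. \<forall>j<n. Y k j \<in> V"
    using Zmem tro_zero[OF V] by (auto simp: Y_def p_def mem_Times_iff)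
  have TE: "tensor_eq U V (hprod p X Y i j) (W i j)" if ij: "i < n" "j < n" for i j
    unfolding tensor_eq_def
  proof (intro allI impI)
    fix f assume f: "bilinear_fun U V f"
    define g where "g = (\<lambda>e :: nat \<times> nat \<times> ('h1 \<Rightarrow> 'k1) \<times> ('h2 \<Rightarrow> 'k2).
        if fst e = i \<and> fst (snd e) = j then f (fst (snd (snd e))) (snd (snd (snd e))) else 0)"
    have "(\<Sum>(u,v)\<leftarrow>hprod p X Y i j. f u v) = (\<Sum>k<p. f (X i k) (Y k j))"
      by (simp add: hprod_def comp_def interv_sum_list_conv_sum_set_nat atLeast0LessThan)
    also have "\<dots> = (\<Sum>k<p. g (Z ! k))"
    proof (intro sum.cong refl)
      fix k assume "k \<in> {..<p}"
      hence e: "fst (Z ! k) < n \<and> fst (snd (Z ! k)) < n \<and> snd (snd (Z ! k)) \<in> U \<times> V"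
        using Zmem by (simp add: p_def)
      show "f (X i k) (Y k j) = g (Z ! k)"
      proof (cases "fst (Z ! k) = i")
        case False
        have "Y k j \<in> V" using e tro_zero[OF V] by (auto simp: Y_def mem_Times_iff)
        thus ?thesis using False bil_zero_left[OF f tro_zero[OF U]] by (simp add: X_def g_def)
      next
        case True
        show ?thesis
        proof (cases "fst (snd (Z ! k)) = j")
          case False
          have "fst (snd (snd (Z ! k))) \<in> U" using e by (auto simp: mem_Times_iff)
          thus ?thesis using True False bil_zero_right[OF f tro_zero[OF V]] by (simp add: X_def Y_def g_def)
        qed (simp add: X_def Y_def g_def True)
      qed
    qed
    also have "\<dots> = sum_list (map g Z)" by (simp add: sum_list_nth_sum p_def)
    also have "\<dots> = sum_list (map (\<lambda>(a,b). if (a, b) = (i, j) then (\<Sum>(u,v)\<leftarrow>W i j. f u v) else 0) PL)"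
      unfolding Z_def map_concat my_sum_list_concat map_map
    proof (intro arg_cong[where f=sum_list] map_cong refl)
      fix ab assume "ab \<in> set PL"
      obtain a b where ab: "ab = (a, b)" by force
      show "(sum_list \<circ> (map g \<circ> (\<lambda>(a, b). map (\<lambda>uv. (a, b, uv)) (W a b)))) ab =
            (\<lambda>(a, b). if (a, b) = (i, j) then (\<Sum>(u, v)\<leftarrow>W i j. f u v) else 0) ab"
      proof (cases "a = i \<and> b = j")
        case True
        thus ?thesis by (simp add: ab g_def comp_def case_prod_unfold)
      next
        case False
        have "sum_list (map g (map (\<lambda>uv. (a, b, uv)) (W a b))) = sum_list (map (\<lambda>_. 0::complex) (W a b))"
          using False by (intro arg_cong[where f=sum_list] map_cong refl) (auto simp: g_def)
        also have "\<dots> = 0" by (induction "W a b") auto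
        finally show ?thesis using False by (auto simp: ab comp_def)
      qed
    qed
    also have "\<dots> = sum_list (map (\<lambda>ab. if ab = (i, j) then (\<Sum>(u,v)\<leftarrow>W i j. f u v) else 0) PL)"
      by (intro arg_cong[where f=sum_list] map_cong refl) (auto split: if_splits)
    also have "\<dots> = (\<Sum>ab\<in>set PL. if ab = (i, j) then (\<Sum>(u,v)\<leftarrow>W i j. f u v) else 0)"
      by (rule sum_list_distinct_conv_sum_set) (simp add: PL_def distinct_product)
    also have "\<dots> = (\<Sum>(u,v)\<leftarrow>W i j. f u v)"
    proof -
      have "(i, j) \<in> set PL" using ij by (simp add: PL_def)
      thus ?thesis by (simp add: sum.delta')
    qed
    finally show "(\<Sum>(u,v)\<leftarrow>hprod p X Y i j. f u v) = (\<Sum>(u,v)\<leftarrow>W i j. f u v)" .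
  qed
  show ?thesis using XU YV TE by blast
qed



theorem corollary3p8:
  fixes U :: "('h1::chilbert_space \<Rightarrow> 'k1::chilbert_space) set"
    and V :: "('h2::chilbert_space \<Rightarrow> 'k2::chilbert_space) set"
    and \<phi> :: "('h1 \<Rightarrow> 'k1) \<Rightarrow> ('h::chilbert_space \<Rightarrow> 'h)"
    and \<psi> :: "('h2 \<Rightarrow> 'k2) \<Rightarrow> ('h \<Rightarrow> 'h)"
    and n :: nat
    and W :: "nat \<Rightarrow> nat \<Rightarrow> (('h1 \<Rightarrow> 'k1) \<times> ('h2 \<Rightarrow> 'k2)) list"
  assumes "is_TRO U" and "is_TRO V"
    and "ternary_morphism U \<phi>" and "ternary_morphism V \<psi>"
    and "commuting_pair U V \<phi> \<psi>"
    and "\<forall>i<n. \<forall>j<n. set (W i j) \<subseteq> U \<times> V"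
  shows "mat_norm n n (\<lambda>i j. tensor_map \<phi> \<psi> (W i j)) \<le> h_norm U V n W"
proof -
  note U = assms(1) and V = assms(2) and \<phi> = assms(3) and \<psi> = assms(4) and Wm = assms(6)
  define S where "S = {mat_norm n p X * mat_norm p n Y | p X Y.
      (\<forall>i<n. \<forall>k<p. X i k \<in> U) \<and> (\<forall>k<p. \<forall>j<n. Y k j \<in> V) \<and>
      (\<forall>i<n. \<forall>j<n. tensor_eq U V (hprod p X Y i j) (W i j))}"
  have hS: "h_norm U V n W = Inf S" by (simp add: h_norm_def S_def)
  have ne: "S \<noteq> {}" using decomp_exists[OF U V Wm] unfolding S_def by blast
  have bnd: "mat_norm n n (\<lambda>i j. tensor_map \<phi> \<psi> (W i j)) \<le> x" if xS: "x \<in> S" for x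
  proof -
    obtain p X Y where x: "x = mat_norm n p X * mat_norm p n Y"
      and XU: "\<forall>i<n. \<forall>k<p. X i k \<in> U" and YV: "\<forall>k<p. \<forall>j<n. Y k j \<in> V"
      and te: "\<forall>i<n. \<forall>j<n. tensor_eq U V (hprod p X Y i j) (W i j)"
      using xS unfolding S_def by blast
    define T where "T = (\<lambda>i k. \<phi> (X i k))"
    define Sm where "Sm = (\<lambda>k j. \<psi> (Y k j))"
    have Tb: "mbd n p T" using XU tm_bounded[OF \<phi>] by (simp add: mbd_def T_def)
    have Sb: "mbd p n Sm" using YV tm_bounded[OF \<psi>] by (simp add: mbd_def Sm_def)
    have eq: "mat_norm n n (\<lambda>i j. tensor_map \<phi> \<psi> (W i j)) = mat_norm n n (mmul p T Sm)"
    proof (rule mat_norm_cong)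
      fix i j assume i: "i < n" and j: "j < n"
      have "tensor_map \<phi> \<psi> (W i j) = (\<lambda>x. \<Sum>k<p. \<phi> (X i k) (\<psi> (Y k j) x))"
        by (rule tensor_map_eq[OF \<phi> \<psi>]) (use XU YV te i j in auto)
      thus "tensor_map \<phi> \<psi> (W i j) = mmul p T Sm i j" by (simp add: mmul_def T_def Sm_def)
    qed
    have cT: "mat_norm n p T \<le> mat_norm n p X"
      unfolding T_def by (rule tm_contractive[OF U \<phi> XU])
    have cS: "mat_norm p n Sm \<le> mat_norm p n Y"
      unfolding Sm_def by (rule tm_contractive[OF V \<psi>]) (use YV in auto)
    have "mat_norm n n (mmul p T Sm) \<le> mat_norm n p T * mat_norm p n Sm"
      by (rule mat_norm_mmul[OF Tb Sb])
    also have "\<dots> \<le> mat_norm n p X * mat_norm p n Y"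
      by (rule mult_mono[OF cT cS]) (use mat_norm_facts(1)[OF Tb] mat_norm_facts(1)[OF Sb] cT in auto)
    finally show ?thesis using eq x by simp
  qed
  have "mat_norm n n (\<lambda>i j. tensor_map \<phi> \<psi> (W i j)) \<le> Inf S"
    by (rule cInf_greatest[OF ne bnd])
  thus ?thesis using hS by simp
qed

end
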